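(* Let $n\ge 2$, let $F_2$ be the free group on $a,b$, $T=[a,b]$, and let $R_{\mathrm{Heis}_n}$ be the kernel of the surjection $F_2\to H_n$, $a\mapsto\alpha$, $b\mapsto\beta$. Then $R_{\mathrm{Heis}_n}$ is a free group freely generated by the union of the following sets: $A_1=\{T^k (a^n)^{b^i}T^{-k}: 0\le i,k\le n-1\}$ ($n^2$ elements), $A_2=\{T^k (b^n)^{a^i}T^{-k}: 0\le i,k\le n-1\}$ ($n^2$ elements), $A_3=\{T^{n-1}\,T^{a^ib^j}: 0\le i,j\le n-2\}$ ($(n-1)^2$ elements), $A_4=\{T^k\,T^{a^ib^j}\,T^{-(k+1)}: 0\le k,i,j\le n-2,\ (i,j)\neq(0,0)\}$ ($(n-1)^3-(n-1)$ elements), in total $n^3+1$ free generators.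
   Context: $H_n$ is the group of $3\times 3$ upper unitriangular matrices with entries in $\mathbb{Z}/n\mathbb{Z}$, with $\alpha$ the matrix with $(1,2)$-entry $1$ and other off-diagonal entries $0$, and $\beta$ the matrix with $(2,3)$-entry $1$ and other off-diagonal entries $0$. Commutator: $[x,y]=xyx^{-1}y^{-1}$. Exponent notation: $x^y=yxy^{-1}$. *)

theory Defs
  imports "HOL-Algebra.Coset" "HOL-Algebra.Generated_Groups"
begin

text \<open>A letter is a pair (generator, flag); flag True means the inverse of the generator.\<close>

type_synonym 'a word = "('a \<times> bool) list"

definition reduced :: "'a word \<Rightarrow> bool" where
  "reduced w \<longleftrightarrow> (\<forall>i. Suc i < length w \<longrightarrow>
      \<not> (fst (w ! i) = fst (w ! Suc i) \<and> snd (w ! i) \<noteq> snd (w ! Suc i)))"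

fun red_cons :: "'a \<times> bool \<Rightarrow> 'a word \<Rightarrow> 'a word" where
  "red_cons x [] = [x]"
| "red_cons x (y # ys) = (if fst x = fst y \<and> snd x \<noteq> snd y then ys else x # y # ys)"

definition word_mult :: "'a word \<Rightarrow> 'a word \<Rightarrow> 'a word" where
  "word_mult xs ys = foldr red_cons xs ys"

definition free_group :: "'a set \<Rightarrow> 'a word monoid" where
  "free_group Gens = \<lparr> carrier = {w. reduced w \<and> fst ` set w \<subseteq> Gens},
                     mult = word_mult, one = [] \<rparr>"

definition F2 :: "bool word monoid" where "F2 = free_group UNIV"
definition gen_a :: "bool word" where "gen_a = [(False, False)]"
definition gen_b :: "bool word" where "gen_b = [(True, False)]"

definition commutator :: "('a, 'b) monoid_scheme \<Rightarrow> 'a \<Rightarrow> 'a \<Rightarrow> 'a" where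
  "commutator G x y = x \<otimes>\<^bsub>G\<^esub> y \<otimes>\<^bsub>G\<^esub> inv\<^bsub>G\<^esub> x \<otimes>\<^bsub>G\<^esub> inv\<^bsub>G\<^esub> y"

text \<open>conjugate G x y is x^y = y x y^{-1}.\<close>
definition conjugate :: "('a, 'b) monoid_scheme \<Rightarrow> 'a \<Rightarrow> 'a \<Rightarrow> 'a" where
  "conjugate G x y = y \<otimes>\<^bsub>G\<^esub> x \<otimes>\<^bsub>G\<^esub> inv\<^bsub>G\<^esub> y"

definition eval_word :: "('a, 'b) monoid_scheme \<Rightarrow> 'a word \<Rightarrow> 'a" where
  "eval_word G w = foldr (\<lambda>(s, e) acc. (if e then inv\<^bsub>G\<^esub> s else s) \<otimes>\<^bsub>G\<^esub> acc) w \<one>\<^bsub>G\<^esub>"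

definition free_basis :: "('a, 'b) monoid_scheme \<Rightarrow> 'a set \<Rightarrow> bool" where
  "free_basis G S \<longleftrightarrow> S \<subseteq> carrier G \<and>
     (\<forall>w. w \<noteq> [] \<and> reduced w \<and> fst ` set w \<subseteq> S \<longrightarrow> eval_word G w \<noteq> \<one>\<^bsub>G\<^esub>)"

definition freely_generated_by :: "('a, 'b) monoid_scheme \<Rightarrow> 'a set \<Rightarrow> 'a set \<Rightarrow> bool" where
  "freely_generated_by G H S \<longleftrightarrow> generate G S = H \<and> free_basis G S"

text \<open>An upper unitriangular 3x3 matrix over Z/nZ with entries (1,2) = x, (1,3) = y, (2,3) = z
  is represented by the triple (x, y, z) with entries in {0..<n}. The product is the matrix product.\<close>

definition heis :: "nat \<Rightarrow> (int \<times> int \<times> int) monoid" where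
  "heis n = \<lparr> carrier = {0..<int n} \<times> {0..<int n} \<times> {0..<int n},
     mult = (\<lambda>(x, y, z) (x', y', z').
               ((x + x') mod int n, (y + y' + x * z') mod int n, (z + z') mod int n)),
     one = (0, 0, 0) \<rparr>"

definition heis_alpha :: "int \<times> int \<times> int" where "heis_alpha = (1, 0, 0)"
definition heis_beta :: "int \<times> int \<times> int" where "heis_beta = (0, 0, 1)"

end

theory Submission
  imports Defs
begin


definition inv_l :: "'a \<times> bool \<Rightarrow> 'a \<times> bool" where "inv_l x = (fst x, \<not> snd x)"
definition winv :: "'a word \<Rightarrow> 'a word" where "winv w = rev (map inv_l w)"
definition red :: "'a word \<Rightarrow> 'a word" where "red w = foldr red_cons w []"

lemma inv_l_inv_l[simp]: "inv_l (inv_l x) = x" by (simp add: inv_l_def)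
lemma winv_Nil[simp]: "winv [] = []" by (simp add: winv_def)
lemma winv_Cons: "winv (x # w) = winv w @ [inv_l x]" by (simp add: winv_def)
lemma winv_append[simp]: "winv (u @ v) = winv v @ winv u" by (simp add: winv_def)
lemma winv_winv[simp]: "winv (winv w) = w" by (simp add: winv_def rev_map comp_def)
lemma winv_single[simp]: "winv [x] = [inv_l x]" by (simp add: winv_def)

lemma reduced_Nil[simp]: "reduced []" by (simp add: reduced_def)
lemma reduced_single[simp]: "reduced [x]" by (simp add: reduced_def)
lemma reduced_Cons2: "reduced (x # y # w) \<longleftrightarrow> \<not> (fst x = fst y \<and> snd x \<noteq> snd y) \<and> reduced (y # w)"
  unfolding reduced_def
  apply (rule iffI)
   apply (intro conjI)
    apply (metis length_Cons nth_Cons_0 nth_Cons_Suc zero_less_Suc Suc_less_eq)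
   apply (metis length_Cons nth_Cons_Suc Suc_less_eq)
  apply clarify
  subgoal for i by (cases i) auto
  done

lemma reduced_ConsD: "reduced (x # w) \<Longrightarrow> reduced w"
  by (cases w) (auto simp: reduced_Cons2)

lemma red_cons_reduced: "reduced w \<Longrightarrow> reduced (red_cons x w)"
proof (cases w)
  case Nil then show ?thesis by simp
next
  case (Cons y ys)
  assume r: "reduced w"
  show ?thesis using r Cons by (auto simp: reduced_Cons2 dest: reduced_ConsD)
qed

lemma reduced_red[simp]: "reduced (red w)"
  by (induction w) (auto simp: red_def red_cons_reduced)

lemma red_Cons: "red (x # w) = red_cons x (red w)" by (simp add: red_def)
lemma red_Nil[simp]: "red [] = []" by (simp add: red_def)

lemma red_cons_reduced_id: "reduced (x # w) \<Longrightarrow> red_cons x w = x # w"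
  by (cases w) (auto simp: reduced_Cons2)

lemma red_reduced: "reduced w \<Longrightarrow> red w = w"
proof (induction w)
  case (Cons x w)
  then have "red w = w" using reduced_ConsD by blast
  then show ?case using Cons.prems by (simp add: red_Cons red_cons_reduced_id)
qed simp

lemma red_red[simp]: "red (red w) = red w" by (simp add: red_reduced)

lemma red_cons_cancel: "reduced w \<Longrightarrow> red_cons x (red_cons (inv_l x) w) = w"
proof (cases w)
  case Nil then show ?thesis by (simp add: inv_l_def)
next
  case (Cons y ys)
  assume r: "reduced w"
  show ?thesis
  proof (cases "fst (inv_l x) = fst y \<and> snd (inv_l x) \<noteq> snd y")
    case True
    then have y: "y = x" by (cases x, cases y) (auto simp: inv_l_def)
    have "red_cons x ys = x # ys"
      using r Cons y by (intro red_cons_reduced_id) simp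
    then show ?thesis using True Cons y by simp
  next
    case False
    then show ?thesis using Cons by (auto simp: inv_l_def)
  qed
qed

lemma foldr_red_cons_reduced: "reduced r \<Longrightarrow> reduced (foldr red_cons u r)"
  by (induction u) (auto simp: red_cons_reduced)

lemma foldr_red_cons_step:
  assumes "reduced z" "reduced r"
  shows "foldr red_cons (red_cons x z) r = red_cons x (foldr red_cons z r)"
proof (cases z)
  case Nil then show ?thesis by simp
next
  case (Cons y ys)
  show ?thesis
  proof (cases "fst x = fst y \<and> snd x \<noteq> snd y")
    case True
    then have y: "y = inv_l x" by (cases x, cases y) (auto simp: inv_l_def)
    have "reduced (foldr red_cons ys r)" using assms by (intro foldr_red_cons_reduced)
    then have "red_cons x (red_cons (inv_l x) (foldr red_cons ys r)) = foldr red_cons ys r"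
      by (rule red_cons_cancel)
    moreover have "red_cons x z = ys" using True Cons by simp
    ultimately show ?thesis using Cons y by simp
  next
    case False
    then have "red_cons x z = x # z" using Cons by simp
    then show ?thesis by simp
  qed
qed

lemma foldr_red: "reduced r \<Longrightarrow> foldr red_cons (red u) r = foldr red_cons u r"
proof (induction u)
  case Nil then show ?case by simp
next
  case (Cons x u)
  have "foldr red_cons (red (x # u)) r = foldr red_cons (red_cons x (red u)) r" by (simp add: red_Cons)
  also have "\<dots> = red_cons x (foldr red_cons (red u) r)"
    using Cons by (intro foldr_red_cons_step) auto
  finally show ?case using Cons by simp
qed

lemma red_append: "red (u @ v) = foldr red_cons u (red v)"
  by (simp add: red_def)

lemma red_append_red1[simp]: "red (red u @ v) = red (u @ v)"
  by (simp add: red_append foldr_red)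

lemma red_append_red2[simp]: "red (u @ red v) = red (u @ v)"
  by (simp add: red_append)

lemma red_cancel_pair: "red (u @ [x, inv_l x] @ v) = red (u @ v)"
proof -
  have "red ([x, inv_l x] @ v) = red v"
    using red_cons_cancel[of "red v" x] by (simp only: red_append foldr.simps o_apply id_apply reduced_red) 
  then have "red (u @ red ([x, inv_l x] @ v)) = red (u @ red v)" by simp
  then show ?thesis by simp
qed

lemma red_cancel_pair': "red (u @ [inv_l x, x] @ v) = red (u @ v)"
  using red_cancel_pair[of u "inv_l x" v] by simp

lemma red_winv_right: "red (u @ winv u @ v) = red v"
proof (induction u arbitrary: v)
  case Nil then show ?case by simp
next
  case (Cons x u)
  have "red ((x # u) @ winv (x # u) @ v) = red ([x] @ (u @ winv u @ ([inv_l x] @ v)))"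
    by (simp add: winv_Cons)
  also have "\<dots> = red ([x] @ red (u @ winv u @ ([inv_l x] @ v)))" by (simp only: red_append_red2)
  also have "\<dots> = red ([x] @ red ([inv_l x] @ v))" using Cons by simp
  also have "\<dots> = red ([] @ [x, inv_l x] @ v)" by (simp only: red_append_red2) simp
  also have "\<dots> = red v" by (simp only: red_cancel_pair) simp
  finally show ?case .
qed

lemma red_winv_left: "red (winv u @ u @ v) = red v"
  using red_winv_right[of "winv u" v] by simp

lemma red_winv_right0[simp]: "red (u @ winv u) = []"
  using red_winv_right[of u "[]"] by simp
lemma red_winv_left0[simp]: "red (winv u @ u) = []"
  using red_winv_left[of u "[]"] by simp

lemma red_cong_append: "red u = red u' \<Longrightarrow> red v = red v' \<Longrightarrow> red (u @ v) = red (u' @ v')"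
  by (metis red_append_red1 red_append_red2)

lemma red_winv_cong: "red u = red v \<Longrightarrow> red (winv u) = red (winv v)"
proof -
  assume e: "red u = red v"
  have 1: "red (winv u @ v) = []"
  proof -
    have "red (winv u @ v) = red (winv u @ red v)" by simp
    also have "\<dots> = red (winv u @ red u)" using e by simp
    also have "\<dots> = []" by (simp only: red_append_red2) simp
    finally show ?thesis .
  qed
  have "red (winv u) = red (winv u @ red (v @ winv v))" by simp
  also have "\<dots> = red ((winv u @ v) @ winv v)" by (simp only: red_append_red2 append_assoc)
  also have "\<dots> = red (red (winv u @ v) @ winv v)" by (simp only: red_append_red1)
  also have "\<dots> = red (winv v)" using 1 by simp
  finally show ?thesis .
qed

lemma reduced_winv: "reduced w \<Longrightarrow> reduced (winv w)"
  unfolding reduced_def winv_def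
proof (intro allI impI)
  fix i assume r: "\<forall>i. Suc i < length w \<longrightarrow> \<not> (fst (w ! i) = fst (w ! Suc i) \<and> snd (w ! i) \<noteq> snd (w ! Suc i))"
    and i: "Suc i < length (rev (map inv_l w))"
  define j where "j = length w - Suc (Suc i)"
  have sj: "Suc j = length w - Suc i" and jl: "Suc j < length w" using i by (auto simp: j_def)
  have e1: "rev (map inv_l w) ! i = inv_l (w ! Suc j)" using i sj by (simp add: rev_nth)
  have e2: "rev (map inv_l w) ! Suc i = inv_l (w ! j)" using i by (simp add: rev_nth j_def)
  show "\<not> (fst (rev (map inv_l w) ! i) = fst (rev (map inv_l w) ! Suc i) \<and>
          snd (rev (map inv_l w) ! i) \<noteq> snd (rev (map inv_l w) ! Suc i))"
    using r[rule_format, OF jl] by (auto simp: e1 e2 inv_l_def)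
qed

lemma fst_set_winv[simp]: "fst ` set (winv w) = fst ` set w"
  by (force simp: winv_def inv_l_def image_iff)

lemma set_red_cons: "set (red_cons x w) \<subseteq> insert x (set w)"
  by (cases w) auto

lemma set_red: "set (red w) \<subseteq> set w"
  by (induction w) (auto simp: red_Cons dest: subsetD[OF set_red_cons])

lemma word_mult_red: "reduced v \<Longrightarrow> word_mult u v = red (u @ v)"
  by (simp add: word_mult_def red_append red_reduced)

lemma F2_carrier: "carrier F2 = {w. reduced w}"
  by (simp add: F2_def free_group_def)
lemma F2_mult: "reduced v \<Longrightarrow> x \<otimes>\<^bsub>F2\<^esub> v = red (x @ v)"
  by (simp add: F2_def free_group_def word_mult_red)
lemma F2_one: "\<one>\<^bsub>F2\<^esub> = []"
  by (simp add: F2_def free_group_def)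

lemma group_F2: "group F2"
proof (rule groupI)
  show "\<And>x y. x \<in> carrier F2 \<Longrightarrow> y \<in> carrier F2 \<Longrightarrow> x \<otimes>\<^bsub>F2\<^esub> y \<in> carrier F2"
    by (simp add: F2_carrier F2_mult)
  show "\<one>\<^bsub>F2\<^esub> \<in> carrier F2" by (simp add: F2_carrier F2_one)
  show "\<And>x y z. x \<in> carrier F2 \<Longrightarrow> y \<in> carrier F2 \<Longrightarrow> z \<in> carrier F2 \<Longrightarrow>
      x \<otimes>\<^bsub>F2\<^esub> y \<otimes>\<^bsub>F2\<^esub> z = x \<otimes>\<^bsub>F2\<^esub> (y \<otimes>\<^bsub>F2\<^esub> z)"
    by (simp add: F2_carrier F2_mult)
  show "\<And>x. x \<in> carrier F2 \<Longrightarrow> \<one>\<^bsub>F2\<^esub> \<otimes>\<^bsub>F2\<^esub> x = x"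
    by (simp add: F2_carrier F2_mult F2_one red_reduced)
  show "\<And>x. x \<in> carrier F2 \<Longrightarrow> \<exists>y\<in>carrier F2. y \<otimes>\<^bsub>F2\<^esub> x = \<one>\<^bsub>F2\<^esub>"
    by (rule_tac x="winv x" in bexI) (auto simp: F2_carrier F2_mult F2_one reduced_winv)
qed

interpretation F2: group F2 by (rule group_F2)

lemma F2_inv: "reduced x \<Longrightarrow> inv\<^bsub>F2\<^esub> x = winv x"
  by (rule F2.inv_equality) (auto simp: F2_carrier F2_mult F2_one reduced_winv)

lemma red_in_F2[simp]: "red x \<in> carrier F2" by (simp add: F2_carrier)

lemma F2_mult_red[simp]: "red u \<otimes>\<^bsub>F2\<^esub> red v = red (u @ v)"
  by (simp add: F2_mult)
lemma F2_inv_red[simp]: "inv\<^bsub>F2\<^esub> (red u) = red (winv u)"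
proof -
  have "winv (red u) = red (winv (red u))" by (simp add: red_reduced reduced_winv)
  also have "\<dots> = red (winv u)" by (rule red_winv_cong) simp
  finally show ?thesis by (simp add: F2_inv)
qed

definition pw :: "'a word \<Rightarrow> nat \<Rightarrow> 'a word" where "pw u k = concat (replicate k u)"

lemma pw_0[simp]: "pw u 0 = []" by (simp add: pw_def)
lemma pw_Suc: "pw u (Suc k) = u @ pw u k" by (simp add: pw_def)
lemma pw_Suc2: "pw u (Suc k) = pw u k @ u" by (simp add: pw_def replicate_append_same[symmetric])
lemma pw_add: "pw u (k + m) = pw u k @ pw u m" by (simp add: pw_def replicate_add)

lemma F2_pow_red[simp]: "red u [^]\<^bsub>F2\<^esub> k = red (pw u k)"
proof (induction k)
  case 0 then show ?case by (simp add: F2_one)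
next
  case (Suc k)
  have "red u [^]\<^bsub>F2\<^esub> Suc k = red (pw u k) \<otimes>\<^bsub>F2\<^esub> red u" using Suc by simp
  also have "\<dots> = red (pw u (Suc k))" by (simp add: pw_Suc2)
  finally show ?case .
qed


section \<open>Heisenberg group\<close>

lemma modL1: "((a::int) mod N + b + (c mod N) * d) mod N = (a + b + c*d) mod N"
  by (metis mod_add_cong mod_add_left_eq mod_add_right_eq mod_mult_left_eq mod_mult_right_eq mult.commute)
lemma modL3: "((y::int) + (z * (a mod N) + b mod N)) mod N = (y + z*a + b) mod N"
  by (metis is_num_normalize(1) mod_add_cong mod_add_right_eq mod_mult_right_eq)
lemma modL2: "((a::int) + b mod N + c * (d mod N)) mod N = (a + b + c * d) mod N"
  by (metis mod_add_cong mod_add_left_eq mod_add_right_eq mod_mult_left_eq mod_mult_right_eq mult.commute)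

lemma heis_carrier: "carrier (heis n) = {0..<int n} \<times> {0..<int n} \<times> {0..<int n}"
  by (simp add: heis_def)
lemma heis_mult: "(x, y, z) \<otimes>\<^bsub>heis n\<^esub> (x', y', z') =
   ((x + x') mod int n, (y + y' + x * z') mod int n, (z + z') mod int n)"
  by (simp add: heis_def)
lemma heis_one: "\<one>\<^bsub>heis n\<^esub> = (0,0,0)" by (simp add: heis_def)

lemma group_heis: assumes "n \<ge> 1" shows "group (heis n)"
proof (rule groupI)
  have N: "int n > 0" using assms by simp
  show "\<And>x y. x \<in> carrier (heis n) \<Longrightarrow> y \<in> carrier (heis n) \<Longrightarrow> x \<otimes>\<^bsub>heis n\<^esub> y \<in> carrier (heis n)"
    using N by (auto simp: heis_carrier heis_mult)
  show "\<one>\<^bsub>heis n\<^esub> \<in> carrier (heis n)" using N by (simp add: heis_carrier heis_one)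
  show "\<And>x y z. x \<in> carrier (heis n) \<Longrightarrow> y \<in> carrier (heis n) \<Longrightarrow> z \<in> carrier (heis n) \<Longrightarrow>
      x \<otimes>\<^bsub>heis n\<^esub> y \<otimes>\<^bsub>heis n\<^esub> z = x \<otimes>\<^bsub>heis n\<^esub> (y \<otimes>\<^bsub>heis n\<^esub> z)"
    apply (clarsimp simp: heis_carrier heis_mult)
    apply (intro conjI)
      apply (simp add: mod_add_left_eq mod_add_right_eq add.assoc)
     apply (simp only: modL1 modL2)
     apply (simp add: algebra_simps)
    apply (simp add: mod_add_left_eq mod_add_right_eq add.assoc)
    done
  show "\<And>x. x \<in> carrier (heis n) \<Longrightarrow> \<one>\<^bsub>heis n\<^esub> \<otimes>\<^bsub>heis n\<^esub> x = x"
    by (auto simp: heis_carrier heis_mult heis_one)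
  show "\<And>x. x \<in> carrier (heis n) \<Longrightarrow> \<exists>y\<in>carrier (heis n). y \<otimes>\<^bsub>heis n\<^esub> x = \<one>\<^bsub>heis n\<^esub>"
  proof -
    fix v assume v: "v \<in> carrier (heis n)"
    obtain x y z where v': "v = (x, y, z)" by (cases v) auto
    show "\<exists>y\<in>carrier (heis n). y \<otimes>\<^bsub>heis n\<^esub> v = \<one>\<^bsub>heis n\<^esub>"
      apply (rule bexI[of _ "((- x) mod int n, (- y + x * z) mod int n, (- z) mod int n)"])
      using N v v' apply (simp_all add: heis_carrier heis_mult heis_one)
      apply (intro conjI)
        apply (simp add: mod_add_left_eq)
       apply (simp only: modL1)
       apply (simp add: algebra_simps)
      apply (simp add: mod_add_left_eq)
      done
  qed
qed

section \<open>Walks\<close>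

definition gl :: "nat \<Rightarrow> bool \<times> bool \<Rightarrow> int \<times> int \<times> int" where
  "gl n l = (if fst l then (if snd l then (0, 0, int n - 1) else (0, 0, 1))
             else (if snd l then (int n - 1, 0, 0) else (1, 0, 0)))"

definition step :: "nat \<Rightarrow> int \<times> int \<times> int \<Rightarrow> bool \<times> bool \<Rightarrow> int \<times> int \<times> int" where
  "step n v l = v \<otimes>\<^bsub>heis n\<^esub> gl n l"

definition walk :: "nat \<Rightarrow> int \<times> int \<times> int \<Rightarrow> bool word \<Rightarrow> int \<times> int \<times> int" where
  "walk n v w = foldl (step n) v w"

lemma walk_Nil[simp]: "walk n v [] = v" by (simp add: walk_def)
lemma walk_Cons[simp]: "walk n v (l # w) = walk n (step n v l) w" by (simp add: walk_def)
lemma walk_append[simp]: "walk n v (u @ w) = walk n (walk n v u) w" by (simp add: walk_def)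

definition VV :: "nat \<Rightarrow> (int \<times> int \<times> int) set" where
  "VV n = {0..<int n} \<times> {0..<int n} \<times> {0..<int n}"

lemma step_a: "step n (x, y, z) (False, False) = ((x + 1) mod int n, y mod int n, z mod int n)"
  by (simp add: step_def gl_def heis_mult)
lemma step_A: "step n (x, y, z) (False, True) = ((x - 1) mod int n, y mod int n, z mod int n)"
proof -
  have "(x + (int n - 1)) mod int n = (x - 1) mod int n"
    by (metis add_diff_eq diff_add_cancel mod_add_self2 add.commute diff_diff_eq2)
  then show ?thesis by (simp add: step_def gl_def heis_mult)
qed
lemma step_b: "step n (x, y, z) (True, False) = (x mod int n, (y + x) mod int n, (z + 1) mod int n)"
  by (simp add: step_def gl_def heis_mult)
lemma step_B: "step n (x, y, z) (True, True) = (x mod int n, (y - x) mod int n, (z - 1) mod int n)"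
proof -
  have 1: "(z + (int n - 1)) mod int n = (z - 1) mod int n"
    by (metis add_diff_eq diff_add_cancel mod_add_self2 add.commute diff_diff_eq2)
  have "(y + x * (int n - 1)) = (y - x) + x * int n" by (simp add: algebra_simps)
  then have 2: "(y + x * (int n - 1)) mod int n = (y - x) mod int n" by (metis mod_mult_self1)
  show ?thesis using 1 2 by (simp add: step_def gl_def heis_mult)
qed

lemma step_VV: "n \<ge> 1 \<Longrightarrow> step n v l \<in> VV n"
  by (cases v) (auto simp: step_def gl_def heis_mult VV_def)

lemma walk_VV: "n \<ge> 1 \<Longrightarrow> v \<in> VV n \<Longrightarrow> walk n v w \<in> VV n"
  by (induction w arbitrary: v) (auto simp: step_VV)

lemma step_inv: "n \<ge> 1 \<Longrightarrow> v \<in> VV n \<Longrightarrow> step n (step n v l) (inv_l l) = v"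
proof -
  assume n: "n \<ge> 1" and v: "v \<in> VV n"
  obtain x y z where xyz: "v = (x,y,z)" by (cases v) auto
  have b: "0 \<le> x" "x < int n" "0 \<le> y" "y < int n" "0 \<le> z" "z < int n" using v xyz by (auto simp: VV_def)
  obtain g e where l: "l = (g, e)" by (cases l) auto
  show ?thesis
    using b xyz l by (cases g; cases e) (auto simp: inv_l_def step_a step_A step_b step_B mod_simps)
qed

lemma walk_red_cons: "n \<ge> 1 \<Longrightarrow> v \<in> VV n \<Longrightarrow> walk n v (red_cons l w) = walk n v (l # w)"
proof (cases w)
  case (Cons y ys)
  assume n: "n \<ge> 1" and v: "v \<in> VV n"
  show ?thesis
  proof (cases "fst l = fst y \<and> snd l \<noteq> snd y")
    case True
    then have "y = inv_l l" by (cases l, cases y) (auto simp: inv_l_def)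
    then show ?thesis using True Cons step_inv[OF n v] by simp
  next
    case False
    then have "red_cons l w = l # w" using Cons by simp
    then show ?thesis by simp
  qed
qed simp

lemma walk_red: "n \<ge> 1 \<Longrightarrow> v \<in> VV n \<Longrightarrow> walk n v (red w) = walk n v w"
proof (induction w arbitrary: v)
  case (Cons l w)
  have "walk n v (red (l # w)) = walk n v (red_cons l (red w))" by (simp add: red_Cons)
  also have "\<dots> = walk n (step n v l) (red w)" using Cons.prems by (simp add: walk_red_cons)
  also have "\<dots> = walk n (step n v l) w" using Cons by (simp add: step_VV)
  finally show ?case by simp
qed simp

lemma walk_winv: "n \<ge> 1 \<Longrightarrow> v \<in> VV n \<Longrightarrow> walk n (walk n v u) (winv u) = v"
proof (induction u arbitrary: v)
  case (Cons l u)
  have "walk n (walk n v (l # u)) (winv (l # u)) = walk n (walk n (walk n (step n v l) u) (winv u)) [inv_l l]"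
    by (simp add: winv_Cons)
  also have "\<dots> = step n (step n v l) (inv_l l)" using Cons by (simp add: step_VV)
  also have "\<dots> = v" using Cons.prems by (simp add: step_inv)
  finally show ?case .
qed simp

lemma walk_mult:
  assumes n2: "n \<ge> 2" and v: "v \<in> VV n"
  shows "walk n v w = v \<otimes>\<^bsub>heis n\<^esub> walk n (0,0,0) w"
proof -
  have n: "n \<ge> 1" using n2 by simp
  interpret H: group "heis n" using group_heis n by simp
  have VVc: "VV n = carrier (heis n)" by (simp add: VV_def heis_carrier)
  have gl: "gl n l \<in> carrier (heis n)" for l using n2 by (auto simp: gl_def heis_carrier)
  show ?thesis using v
  proof (induction w arbitrary: v)
    case Nil then show ?case using Nil.prems H.r_one[of v] by (simp add: VVc heis_one)
  next
    case (Cons l w)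
    have s: "step n v l \<in> VV n" using n by (simp add: step_VV)
    have "walk n v (l # w) = step n v l \<otimes>\<^bsub>heis n\<^esub> walk n (0, 0, 0) w" using Cons s by simp
    also have "\<dots> = v \<otimes>\<^bsub>heis n\<^esub> (gl n l \<otimes>\<^bsub>heis n\<^esub> walk n (0, 0, 0) w)"
      using Cons.prems gl walk_VV[OF n, of "(0,0,0)" w] n
        H.m_assoc[of v "gl n l" "walk n (0,0,0) w"]
      by (simp add: step_def VVc heis_carrier)
    also have "gl n l \<otimes>\<^bsub>heis n\<^esub> walk n (0, 0, 0) w = walk n (gl n l) w"
      using Cons.IH[of "gl n l"] gl VVc by simp
    also have "gl n l = step n (0,0,0) l"
      using H.l_one[OF gl[of l]] by (simp add: step_def heis_one)
    finally show ?case by simp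
  qed
qed

lemma h_walk:
  assumes n: "n \<ge> 2" and h: "h \<in> hom F2 (heis n)"
    and ha: "h gen_a = heis_alpha" and hb: "h gen_b = heis_beta"
    and w: "w \<in> carrier F2"
  shows "h w = walk n (0,0,0) w"
proof -
  have n1: "n \<ge> 1" using n by simp
  interpret H: group "heis n" using group_heis n1 by simp
  interpret GH: group_hom F2 "heis n" h
    using h by (simp add: group_hom_def group_hom_axioms_def group_F2 H.group_axioms)
  have VVc: "VV n = carrier (heis n)" by (simp add: VV_def heis_carrier)
  have hl: "h [l] = gl n l" for l
  proof -
    obtain g e where l: "l = (g, e)" by (cases l) auto
    have ga: "gen_a \<in> carrier F2" "gen_b \<in> carrier F2" by (auto simp: F2_carrier gen_a_def gen_b_def)
    have ia: "inv\<^bsub>F2\<^esub> gen_a = [(False, True)]" "inv\<^bsub>F2\<^esub> gen_b = [(True, True)]"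
      by (auto simp: F2_inv gen_a_def gen_b_def winv_def inv_l_def)
    have ha': "inv\<^bsub>heis n\<^esub> heis_alpha = (int n - 1, 0, 0)"
      by (rule H.inv_equality) (use n in \<open>auto simp: heis_alpha_def heis_mult heis_one heis_carrier\<close>)
    have hb': "inv\<^bsub>heis n\<^esub> heis_beta = (0, 0, int n - 1)"
      by (rule H.inv_equality) (use n in \<open>auto simp: heis_beta_def heis_mult heis_one heis_carrier\<close>)
    show ?thesis
    proof (cases g; cases e)
      assume "g" "e" then show ?thesis using GH.hom_inv[OF ga(2)] ia hb hb' l by (simp add: gl_def)
    next
      assume "g" "\<not>e" then show ?thesis using hb l by (simp add: gl_def gen_b_def heis_beta_def)
    next
      assume "\<not>g" "e" then show ?thesis using GH.hom_inv[OF ga(1)] ia ha ha' l by (simp add: gl_def)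
    next
      assume "\<not>g" "\<not>e" then show ?thesis using ha l by (simp add: gl_def gen_a_def heis_alpha_def)
    qed
  qed
  show ?thesis using w
  proof (induction w)
    case Nil then show ?case using GH.hom_one by (simp add: F2_one heis_one)
  next
    case (Cons l w)
    have rw: "reduced w" using Cons.prems by (simp add: F2_carrier reduced_ConsD)
    have "l # w = [l] \<otimes>\<^bsub>F2\<^esub> w" using Cons.prems rw by (simp add: F2_mult F2_carrier red_reduced)
    then have "h (l # w) = h [l] \<otimes>\<^bsub>heis n\<^esub> h w"
      using rw by (simp add: F2_carrier)
    also have "\<dots> = gl n l \<otimes>\<^bsub>heis n\<^esub> walk n (0,0,0) w" using Cons rw by (simp add: hl F2_carrier)
    also have "\<dots> = walk n (gl n l) w"
      using walk_mult[OF n, of "gl n l" w] n by (auto simp: gl_def VV_def)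
    also have "gl n l = step n (0,0,0) l"
      using n by (auto simp: step_def gl_def heis_mult zmod_minus1)
    finally show ?case by simp
  qed
qed


section \<open>Spanning tree and rewriting\<close>

type_synonym vert = "int \<times> int \<times> int"
type_synonym edge = "vert \<times> bool"

fun treeE :: "nat \<Rightarrow> edge \<Rightarrow> bool" where
  "treeE n ((x, y, z), False) = ((z = 0 \<and> x \<le> int n - 2) \<or> (x = 0 \<and> z = 1 \<and> y \<noteq> 0))"
| "treeE n ((x, y, z), True) = (z \<le> int n - 2)"

definition gam :: "nat \<Rightarrow> vert \<Rightarrow> bool \<times> bool \<Rightarrow> edge word" where
  "gam n v l = (if snd l then (let u = step n v l in if treeE n (u, fst l) then [] else [((u, fst l), True)])
               else (if treeE n (v, fst l) then [] else [((v, fst l), False)]))"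

fun phi :: "nat \<Rightarrow> vert \<Rightarrow> bool word \<Rightarrow> edge word" where
  "phi n v [] = []"
| "phi n v (l # w) = gam n v l @ phi n (step n v l) w"

lemma phi_append[simp]: "phi n v (u @ w) = phi n v u @ phi n (walk n v u) w"
  by (induction u arbitrary: v) auto

context fixes n :: nat assumes n2: "n \<ge> 2"
begin

lemma n1: "n \<ge> 1" using n2 by simp

lemma gam_inv: "v \<in> VV n \<Longrightarrow> gam n (step n v l) (inv_l l) = winv (gam n v l)"
proof -
  assume v: "v \<in> VV n"
  have si: "step n (step n v l) (inv_l l) = v" using step_inv[OF n1 v] .
  obtain g e where l: "l = (g, e)" by (cases l) auto
  show ?thesis
  proof (cases e)
    case True
    have "step n (step n v l) (g, False) = v" using si l True by (simp add: inv_l_def)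
    then show ?thesis using l True by (simp add: gam_def inv_l_def Let_def winv_single)
  next
    case False
    have "step n (step n v l) (g, True) = v" using si l False by (simp add: inv_l_def)
    then show ?thesis using l False by (simp add: gam_def inv_l_def Let_def)
  qed
qed

lemma phi_winv: "v \<in> VV n \<Longrightarrow> phi n (walk n v u) (winv u) = winv (phi n v u)"
proof (induction u arbitrary: v)
  case (Cons l u)
  have sv: "step n v l \<in> VV n" using step_VV[OF n1] .
  have "phi n (walk n v (l # u)) (winv (l # u))
      = phi n (walk n (step n v l) u) (winv u) @ phi n (walk n (walk n (step n v l) u) (winv u)) [inv_l l]"
    by (simp add: winv_Cons)
  also have "\<dots> = winv (phi n (step n v l) u) @ gam n (step n v l) (inv_l l)"
    using Cons.IH[OF sv] walk_winv[OF n1 sv] by simp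
  also have "\<dots> = winv (gam n v l @ phi n (step n v l) u)"
    using gam_inv[OF Cons.prems] by simp
  finally show ?case by simp
qed simp

lemma gam_cancel: "v \<in> VV n \<Longrightarrow> red (gam n v l @ gam n (step n v l) (inv_l l) @ r) = red r"
proof -
  assume v: "v \<in> VV n"
  have e: "gam n (step n v l) (inv_l l) = winv (gam n v l)" using gam_inv[OF v] .
  show ?thesis unfolding e by (rule red_winv_right)
qed

lemma phi_red_cons: "v \<in> VV n \<Longrightarrow> red (phi n v (red_cons l w)) = red (phi n v (l # w))"
proof (cases w)
  case (Cons y ys)
  assume v: "v \<in> VV n"
  show ?thesis
  proof (cases "fst l = fst y \<and> snd l \<noteq> snd y")
    case True
    then have y: "y = inv_l l" by (cases l, cases y) (auto simp: inv_l_def)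
    have "red (phi n v (l # w)) = red (gam n v l @ gam n (step n v l) (inv_l l) @ phi n (step n (step n v l) (inv_l l)) ys)"
      using Cons y by simp
    also have "\<dots> = red (phi n (step n (step n v l) (inv_l l)) ys)" using gam_cancel[OF v] by blast
    also have "\<dots> = red (phi n v ys)" using step_inv[OF n1 v] by simp
    finally show ?thesis using True Cons by simp
  next
    case False
    then have "red_cons l w = l # w" using Cons by simp
    then show ?thesis by simp
  qed
qed simp

lemma phi_red: "v \<in> VV n \<Longrightarrow> red (phi n v (red w)) = red (phi n v w)"
proof (induction w arbitrary: v)
  case (Cons l w)
  have sv: "step n v l \<in> VV n" using step_VV[OF n1] .
  have "red (phi n v (red (l # w))) = red (phi n v (red_cons l (red w)))" by (simp add: red_Cons)
  also have "\<dots> = red (phi n v (l # red w))" using phi_red_cons[OF Cons.prems] .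
  also have "\<dots> = red (gam n v l @ red (phi n (step n v l) (red w)))" by simp
  also have "\<dots> = red (gam n v l @ red (phi n (step n v l) w))" using Cons.IH[OF sv] by simp
  finally show ?case by simp
qed simp

end

definition subst :: "('e \<Rightarrow> 'b word) \<Rightarrow> 'e word \<Rightarrow> 'b word" where
  "subst f L = concat (map (\<lambda>l. if snd l then winv (f (fst l)) else f (fst l)) L)"

lemma subst_Nil[simp]: "subst f [] = []" by (simp add: subst_def)
lemma subst_Cons: "subst f (l # L) = (if snd l then winv (f (fst l)) else f (fst l)) @ subst f L"
  by (simp add: subst_def)
lemma subst_append[simp]: "subst f (L @ M) = subst f L @ subst f M" by (simp add: subst_def)
lemma subst_single_F[simp]: "subst f [(e, False)] = f e" by (simp add: subst_def)
lemma subst_single_T[simp]: "subst f [(e, True)] = winv (f e)" by (simp add: subst_def)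

lemma subst_winv: "subst f (winv L) = winv (subst f L)"
  by (induction L) (auto simp: subst_Cons winv_Cons inv_l_def)

lemma subst_red_cons: "red (subst f (red_cons l L)) = red (subst f (l # L))"
proof (cases L)
  case (Cons y ys)
  show ?thesis
  proof (cases "fst l = fst y \<and> snd l \<noteq> snd y")
    case True
    then have y: "y = inv_l l" by (cases l, cases y) (auto simp: inv_l_def)
    have "subst f (l # L) = subst f [l] @ winv (subst f [l]) @ subst f ys"
      using Cons y by (simp add: subst_winv[symmetric] del: subst_winv) (simp add: subst_Cons)
    then have "red (subst f (l # L)) = red (subst f ys)" by (simp add: red_winv_right)
    then show ?thesis using True Cons by simp
  next
    case False
    then have "red_cons l L = l # L" using Cons by simp
    then show ?thesis by simp
  qed
qed simp

lemma subst_red: "red (subst f (red L)) = red (subst f L)"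
proof (induction L)
  case (Cons l L)
  have "red (subst f (red (l # L))) = red (subst f (red_cons l (red L)))" by (simp add: red_Cons)
  also have "\<dots> = red (subst f (l # red L))" by (rule subst_red_cons)
  also have "\<dots> = red (subst f [l] @ red (subst f (red L)))" by (simp add: subst_Cons)
  also have "\<dots> = red (subst f [l] @ red (subst f L))" using Cons by simp
  finally show ?case by (simp add: subst_Cons)
qed simp

lemma subst_cong: "(\<And>e. e \<in> fst ` set L \<Longrightarrow> red (f e) = red (g e)) \<Longrightarrow> red (subst f L) = red (subst g L)"
proof (induction L)
  case (Cons l L)
  have 1: "red (f (fst l)) = red (g (fst l))" using Cons.prems by simp
  have 2: "red (subst f L) = red (subst g L)" using Cons by simp
  have 3: "red (if snd l then winv (f (fst l)) else f (fst l)) = red (if snd l then winv (g (fst l)) else g (fst l))"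
    using 1 red_winv_cong by auto
  show ?case unfolding subst_Cons using red_cong_append[OF 3 2] .
qed simp

section \<open>Telescoping\<close>

definition psi :: "nat \<Rightarrow> (vert \<Rightarrow> bool word) \<Rightarrow> edge \<Rightarrow> bool word" where
  "psi n p e = p (fst e) @ [(snd e, False)] @ winv (p (step n (fst e) (snd e, False)))"

lemma telescope:
  assumes n2: "n \<ge> 2"
    and tree: "\<And>v g. v \<in> VV n \<Longrightarrow> treeE n (v, g) \<Longrightarrow> red (p v @ [(g, False)]) = red (p (step n v (g, False)))"
    and v: "v \<in> VV n"
  shows "red (p v @ u) = red (subst (psi n p) (phi n v u) @ p (walk n v u))"
  using v
proof (induction u arbitrary: v)
  case Nil then show ?case by simp
next
  case (Cons l u)
  have n1: "n \<ge> 1" using n2 by simp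
  have sv: "step n v l \<in> VV n" using step_VV[OF n1] .
  have key: "red (p v @ [l]) = red (subst (psi n p) (gam n v l) @ p (step n v l))"
  proof -
    obtain g e where l: "l = (g, e)" by (cases l) auto
    show ?thesis
    proof (cases e)
      case False
      show ?thesis
      proof (cases "treeE n (v, g)")
        case True then show ?thesis using l False tree[OF Cons.prems True] by (simp add: gam_def)
      next
        case nt: False
        have "red (subst (psi n p) (gam n v l) @ p (step n v l)) =
              red (p v @ [(g, False)] @ (winv (p (step n v l)) @ p (step n v l)))"
          using l False nt by (simp add: gam_def psi_def)
        also have "\<dots> = red (p v @ [(g, False)])"
          by (metis append_assoc red_winv_left append_Nil2 red_append_red2)
        finally show ?thesis using l False by simp
      qed
    next
      case True
      define u' where "u' = step n v l"
      have u'V: "u' \<in> VV n" using sv u'_def by simp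
      have bk: "step n u' (g, False) = v" using step_inv[OF n1 Cons.prems, of l] l True u'_def
        by (simp add: inv_l_def)
      show ?thesis
      proof (cases "treeE n (u', g)")
        case tr: True
        have t: "red (p u' @ [(g, False)]) = red (p v)" using tree[OF u'V tr] bk by simp
        have "red (p v @ [l]) = red (red (p u' @ [(g, False)]) @ [(g, True)])" using t l True by simp
        also have "\<dots> = red (p u' @ [(g, False), inv_l (g, False)] @ [])"
          by (simp add: inv_l_def)
        also have "\<dots> = red (p u')" by (simp only: red_cancel_pair) simp
        finally show ?thesis using l True tr u'_def by (simp add: gam_def Let_def)
      next
        case nt: False
        have "subst (psi n p) (gam n v l) = p v @ [(g, True)] @ winv (p u')"
          using l True nt u'_def bk by (simp add: gam_def Let_def psi_def inv_l_def winv_Cons)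
        then have "red (subst (psi n p) (gam n v l) @ p (step n v l)) = red (p v @ [(g, True)] @ (winv (p u') @ p u'))"
          using u'_def by simp
        also have "\<dots> = red (p v @ [(g, True)])"
          by (metis append_assoc red_winv_left append_Nil2 red_append_red2)
        finally show ?thesis using l True by simp
      qed
    qed
  qed
  have "red (p v @ l # u) = red (red (p v @ [l]) @ u)" by simp
  also have "\<dots> = red (subst (psi n p) (gam n v l) @ p (step n v l) @ u)" using key
    by (metis append_assoc red_append_red1)
  also have "\<dots> = red (subst (psi n p) (gam n v l) @ red (p (step n v l) @ u))" by simp
  also have "\<dots> = red (subst (psi n p) (gam n v l) @ red (subst (psi n p) (phi n (step n v l) u) @ p (walk n (step n v l) u)))"
    using Cons.IH[OF sv] by simp
  finally show ?case by (simp add: subst_def)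
qed


definition aw :: "bool word" where "aw = [(False, False)]"
definition bw :: "bool word" where "bw = [(True, False)]"
definition Tw :: "bool word" where "Tw = [(False, False), (True, False), (False, True), (True, True)]"

definition ga :: "nat \<Rightarrow> edge \<Rightarrow> edge word" where
  "ga n e = (if treeE n e then [] else [(e, False)])"

lemma winv_ga: "winv (ga n e) = (if treeE n e then [] else [(e, True)])"
  by (simp add: ga_def inv_l_def)

definition rP :: "nat \<Rightarrow> nat \<Rightarrow> bool word" where "rP i j = pw aw i @ pw bw j"
definition rA1 :: "nat \<Rightarrow> nat \<Rightarrow> nat \<Rightarrow> bool word" where
  "rA1 n i k = pw Tw k @ pw bw i @ pw aw n @ winv (pw bw i) @ winv (pw Tw k)"
definition rA2 :: "nat \<Rightarrow> nat \<Rightarrow> nat \<Rightarrow> bool word" where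
  "rA2 n i k = pw Tw k @ pw aw i @ pw bw n @ winv (pw aw i) @ winv (pw Tw k)"
definition rA3 :: "nat \<Rightarrow> nat \<Rightarrow> nat \<Rightarrow> bool word" where
  "rA3 n i j = pw Tw (n - 1) @ rP i j @ Tw @ winv (rP i j)"
definition rA4 :: "nat \<Rightarrow> nat \<Rightarrow> nat \<Rightarrow> nat \<Rightarrow> bool word" where
  "rA4 n k i j = pw Tw k @ rP i j @ Tw @ winv (rP i j) @ winv (pw Tw (k + 1))"

context fixes n :: nat assumes n2: "n \<ge> 2"
begin

lemma Tw_step:
  assumes y: "0 \<le> y" "y < int n"
  shows "walk n (0, y, 0) Tw = (0, (y + 1) mod int n, 0)"
    "phi n (0, y, 0) Tw = (if y = int n - 1 then [(((0, 0, 1), False), True)] else [])"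
proof -
  have m1: "1 mod int n = 1" using n2 by simp
  have ym: "y mod int n = y" using y by simp
  have y1: "(y + 1) mod int n = (if y = int n - 1 then 0 else y + 1)" using y by auto
  show "walk n (0, y, 0) Tw = (0, (y + 1) mod int n, 0)"
    using n2 y by (simp add: Tw_def step_a step_b step_A step_B m1 ym mod_simps)
  show "phi n (0, y, 0) Tw = (if y = int n - 1 then [(((0, 0, 1), False), True)] else [])"
    using n2 y by (simp add: Tw_def step_a step_b step_A step_B m1 ym gam_def Let_def y1)
qed

lemma Tpow:
  assumes "k \<le> n - 1"
  shows "walk n (0, 0, 0) (pw Tw k) = (0, int k, 0) \<and> phi n (0, 0, 0) (pw Tw k) = []"
  using assms
proof (induction k)
  case 0 then show ?case by simp
next
  case (Suc k)
  then have k: "k \<le> n - 1" "int k \<noteq> int n - 1" "0 \<le> int k" "int k < int n" by auto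
  have km: "(int k + 1) mod int n = int (Suc k)" using Suc.prems n2 by auto
  show ?case using Suc.IH[OF k(1)] Tw_step[OF k(3) k(4)] k(2) km by (simp add: pw_Suc2)
qed

lemma arun:
  assumes "i \<le> n" "0 \<le> Y" "Y < int n" "0 \<le> z" "z < int n"
  shows "walk n (0, Y, z) (pw aw i) = (int i mod int n, Y, z) \<and>
         phi n (0, Y, z) (pw aw i) = concat (map (\<lambda>t. ga n ((int t, Y, z), False)) [0..<i])"
  using assms(1)
proof (induction i)
  case 0 then show ?case by simp
next
  case (Suc i)
  then have i: "i \<le> n" "i < n" by auto
  have im: "int i mod int n = int i" using i by simp
  have Ym: "Y mod int n = Y" "z mod int n = z" using assms by auto
  show ?case using Suc.IH[OF i(1)] im Ym
    by (auto simp: pw_Suc2 aw_def step_a gam_def ga_def add.commute)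
qed

lemma brun:
  assumes "j \<le> n" "0 \<le> x" "x < int n" "0 \<le> Y" "Y < int n"
  shows "walk n (x, Y, 0) (pw bw j) = (x, (Y + x * int j) mod int n, int j mod int n) \<and>
         phi n (x, Y, 0) (pw bw j) = (if j = n then [(((x, (Y + x * (int n - 1)) mod int n, int n - 1), True), False)] else [])"
  using assms(1)
proof (induction j)
  case 0 then show ?case using assms by simp
next
  case (Suc j)
  then have j: "j \<le> n" "j < n" by auto
  have jm: "int j mod int n = int j" using j by simp
  have xm: "x mod int n = x" using assms by auto
  have e1: "((Y + x * int j) mod int n + x) mod int n = (Y + x * int (Suc j)) mod int n"
    by (simp add: mod_simps algebra_simps)
  have e2: "(Y + x * int j) mod int n = (Y + x * (int n - 1)) mod int n" if "Suc j = n"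
  proof -
    have "int n - 1 = int j" using that by simp
    then show ?thesis by simp
  qed
  have jm2: "(int j + 1) mod int n = int (Suc j) mod int n" by (simp add: add.commute)
  show ?case using Suc.IH[OF j(1)] jm xm e1 j(2)
    by (auto simp: pw_Suc2 bw_def step_b gam_def e2 jm2 simp del: of_nat_Suc)
qed

lemma square:
  assumes "0 \<le> i" "i \<le> int n - 2" "0 \<le> j" "j \<le> int n - 2" "0 \<le> Y" "Y < int n"
  shows "walk n (i, Y, j) Tw = (i, (Y + 1) mod int n, j)"
    "phi n (i, Y, j) Tw = ga n ((i, Y, j), False) @ winv (ga n ((i, (Y + i + 1) mod int n, j + 1), False))"
proof -
  have m: "i mod int n = i" "j mod int n = j" "Y mod int n = Y" "(i + 1) mod int n = i + 1" "(j + 1) mod int n = j + 1"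
    using assms by auto
  have e1: "((Y + (i + 1)) mod int n - i) mod int n = (Y + 1) mod int n"
    by (simp add: mod_simps algebra_simps)
  show "walk n (i, Y, j) Tw = (i, (Y + 1) mod int n, j)"
    using assms by (simp add: Tw_def step_a step_b step_A step_B m e1)
  show "phi n (i, Y, j) Tw = ga n ((i, Y, j), False) @ winv (ga n ((i, (Y + i + 1) mod int n, j + 1), False))"
    using assms by (auto simp: Tw_def step_a step_b step_A step_B m e1 gam_def ga_def Let_def inv_l_def add.assoc)
qed


lemma n1': "n \<ge> 1" using n2 by simp

lemma VV_in: "0 \<le> x \<Longrightarrow> x < int n \<Longrightarrow> 0 \<le> y \<Longrightarrow> y < int n \<Longrightarrow> 0 \<le> z \<Longrightarrow> z < int n \<Longrightarrow> (x, y, z) \<in> VV n"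
  by (simp add: VV_def)

lemma concat_ga_tree: "i \<le> n - 1 \<Longrightarrow> concat (map (\<lambda>t. ga n ((int t, Y, 0), False)) [0..<i]) = []"
  by (auto simp: ga_def)

lemma rP_walk:
  assumes "i \<le> n - 1" "j \<le> n - 1" "0 \<le> Y" "Y < int n"
  shows "walk n (0, Y, 0) (rP i j) = (int i, (Y + int i * int j) mod int n, int j) \<and> phi n (0, Y, 0) (rP i j) = []"
proof -
  have a: "walk n (0, Y, 0) (pw aw i) = (int i, Y, 0)" "phi n (0, Y, 0) (pw aw i) = []"
    using arun[of i Y 0] assms concat_ga_tree[of i Y] n2 by auto
  have b: "walk n (int i, Y, 0) (pw bw j) = (int i, (Y + int i * int j) mod int n, int j)"
    "phi n (int i, Y, 0) (pw bw j) = []"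
    using brun[of j "int i" Y] assms n2 by auto
  show ?thesis using a b by (simp add: rP_def)
qed

lemma rA1_walk:
  assumes "i \<le> n - 1" "k \<le> n - 1"
  shows "walk n (0, 0, 0) (rA1 n i k) = (0, 0, 0)"
    "phi n (0, 0, 0) (rA1 n i k) = concat (map (\<lambda>t. ga n ((int t, int k, int i), False)) [0..<n])"
proof -
  have t: "walk n (0, 0, 0) (pw Tw k) = (0, int k, 0)" "phi n (0, 0, 0) (pw Tw k) = []"
    using Tpow[of k] assms by auto
  have b: "walk n (0, int k, 0) (pw bw i) = (0, int k, int i)" "phi n (0, int k, 0) (pw bw i) = []"
    using brun[of i 0 "int k"] assms n2 by auto
  have a: "walk n (0, int k, int i) (pw aw n) = (0, int k, int i)"
     "phi n (0, int k, int i) (pw aw n) = concat (map (\<lambda>t. ga n ((int t, int k, int i), False)) [0..<n])"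
    using arun[of n "int k" "int i"] assms n2 by auto
  have V: "(0, int k, 0) \<in> VV n" "(0,0,0) \<in> VV n" using assms n2 by (auto simp: VV_def)
  have wb: "walk n (0, int k, int i) (winv (pw bw i)) = (0, int k, 0)"
    "phi n (0, int k, int i) (winv (pw bw i)) = []"
    using walk_winv[OF n1' V(1), of "pw bw i"] phi_winv[OF n2 V(1), of "pw bw i"] b by auto
  have wt: "walk n (0, int k, 0) (winv (pw Tw k)) = (0, 0, 0)"
    "phi n (0, int k, 0) (winv (pw Tw k)) = []"
    using walk_winv[OF n1' V(2), of "pw Tw k"] phi_winv[OF n2 V(2), of "pw Tw k"] t by auto
  show "walk n (0, 0, 0) (rA1 n i k) = (0, 0, 0)" using t b a wb wt by (simp add: rA1_def)
  show "phi n (0, 0, 0) (rA1 n i k) = concat (map (\<lambda>t. ga n ((int t, int k, int i), False)) [0..<n])"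
    using t b a wb wt by (simp add: rA1_def)
qed

lemma rA2_walk:
  assumes "i \<le> n - 1" "k \<le> n - 1"
  shows "walk n (0, 0, 0) (rA2 n i k) = (0, 0, 0)"
    "phi n (0, 0, 0) (rA2 n i k) = [(((int i, (int k + int i * (int n - 1)) mod int n, int n - 1), True), False)]"
proof -
  have t: "walk n (0, 0, 0) (pw Tw k) = (0, int k, 0)" "phi n (0, 0, 0) (pw Tw k) = []"
    using Tpow[of k] assms by auto
  have a: "walk n (0, int k, 0) (pw aw i) = (int i, int k, 0)" "phi n (0, int k, 0) (pw aw i) = []"
    using arun[of i "int k" 0] assms concat_ga_tree[of i "int k"] n2 by auto
  have km: "(int k + int i * int n) mod int n = int k" using assms n2 by simp
  have b: "walk n (int i, int k, 0) (pw bw n) = (int i, int k, 0)"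
    "phi n (int i, int k, 0) (pw bw n) = [(((int i, (int k + int i * (int n - 1)) mod int n, int n - 1), True), False)]"
    using brun[of n "int i" "int k"] assms n2 km by auto
  have V: "(0, int k, 0) \<in> VV n" "(0,0,0) \<in> VV n" using assms n2 by (auto simp: VV_def)
  have wa: "walk n (int i, int k, 0) (winv (pw aw i)) = (0, int k, 0)"
    "phi n (int i, int k, 0) (winv (pw aw i)) = []"
    using walk_winv[OF n1' V(1), of "pw aw i"] phi_winv[OF n2 V(1), of "pw aw i"] a by auto
  have wt: "walk n (0, int k, 0) (winv (pw Tw k)) = (0, 0, 0)"
    "phi n (0, int k, 0) (winv (pw Tw k)) = []"
    using walk_winv[OF n1' V(2), of "pw Tw k"] phi_winv[OF n2 V(2), of "pw Tw k"] t by auto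
  show "walk n (0, 0, 0) (rA2 n i k) = (0, 0, 0)" using t b a wa wt by (simp add: rA2_def)
  show "phi n (0, 0, 0) (rA2 n i k) = [(((int i, (int k + int i * (int n - 1)) mod int n, int n - 1), True), False)]"
    using t b a wa wt by (simp add: rA2_def)
qed

lemma rA4_walk:
  assumes "k \<le> n - 2" "i \<le> n - 2" "j \<le> n - 2"
  shows "walk n (0, 0, 0) (rA4 n k i j) = (0, 0, 0)"
    "phi n (0, 0, 0) (rA4 n k i j) = ga n ((int i, (int k + int i * int j) mod int n, int j), False) @
        winv (ga n ((int i, ((int k + int i * int j) mod int n + int i + 1) mod int n, int j + 1), False))"
proof -
  let ?Y = "(int k + int i * int j) mod int n"
  have t: "walk n (0, 0, 0) (pw Tw k) = (0, int k, 0)" "phi n (0, 0, 0) (pw Tw k) = []"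
    using Tpow[of k] assms by auto
  have t1: "walk n (0, 0, 0) (pw Tw (k + 1)) = (0, int k + 1, 0)" "phi n (0, 0, 0) (pw Tw (k + 1)) = []"
    using Tpow[of "k + 1"] assms n2 by auto
  have p: "walk n (0, int k, 0) (rP i j) = (int i, ?Y, int j)" "phi n (0, int k, 0) (rP i j) = []"
    using rP_walk[of i j "int k"] assms n2 by auto
  have p1: "walk n (0, int k + 1, 0) (rP i j) = (int i, (?Y + 1) mod int n, int j)"
    "phi n (0, int k + 1, 0) (rP i j) = []"
    using rP_walk[of i j "int k + 1"] assms n2 by (auto simp: mod_simps algebra_simps)
  have sq: "walk n (int i, ?Y, int j) Tw = (int i, (?Y + 1) mod int n, int j)"
    "phi n (int i, ?Y, int j) Tw = ga n ((int i, ?Y, int j), False) @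
        winv (ga n ((int i, (?Y + int i + 1) mod int n, int j + 1), False))"
    using square[of "int i" "int j" ?Y] assms n2 by auto
  have V: "(0, int k + 1, 0) \<in> VV n" "(0,0,0) \<in> VV n" using assms n2 by (auto simp: VV_def)
  have wp: "walk n (int i, (?Y + 1) mod int n, int j) (winv (rP i j)) = (0, int k + 1, 0)"
    "phi n (int i, (?Y + 1) mod int n, int j) (winv (rP i j)) = []"
    using walk_winv[OF n1' V(1), of "rP i j"] phi_winv[OF n2 V(1), of "rP i j"] p1 by auto
  have wt: "walk n (0, int k + 1, 0) (winv (pw Tw (k + 1))) = (0, 0, 0)"
    "phi n (0, int k + 1, 0) (winv (pw Tw (k + 1))) = []"
    using walk_winv[OF n1' V(2), of "pw Tw (k + 1)"] phi_winv[OF n2 V(2), of "pw Tw (k + 1)"] t1 by auto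
  show "walk n (0, 0, 0) (rA4 n k i j) = (0, 0, 0)" using t p sq wp wt by (simp add: rA4_def)
  show "phi n (0, 0, 0) (rA4 n k i j) = ga n ((int i, ?Y, int j), False) @
        winv (ga n ((int i, (?Y + int i + 1) mod int n, int j + 1), False))"
    using t p sq wp wt by (simp add: rA4_def)
qed

lemma rA3_walk:
  assumes "i \<le> n - 2" "j \<le> n - 2"
  shows "walk n (0, 0, 0) (rA3 n i j) = (0, 0, 0)"
    "phi n (0, 0, 0) (rA3 n i j) = ga n ((int i, (int (n - 1) + int i * int j) mod int n, int j), False) @
        winv (ga n ((int i, ((int (n - 1) + int i * int j) mod int n + int i + 1) mod int n, int j + 1), False))"
proof -
  let ?k = "n - 1"
  let ?Y = "(int ?k + int i * int j) mod int n"
  have t: "walk n (0, 0, 0) (pw Tw ?k) = (0, int ?k, 0)" "phi n (0, 0, 0) (pw Tw ?k) = []"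
    using Tpow[of ?k] assms by auto
  have p: "walk n (0, int ?k, 0) (rP i j) = (int i, ?Y, int j)" "phi n (0, int ?k, 0) (rP i j) = []"
    using rP_walk[of i j "int ?k"] assms n2 by auto
  have e: "(?Y + 1) mod int n = (0 + int i * int j) mod int n"
    using n2 by (simp add: mod_simps algebra_simps of_nat_diff)
  have p1: "walk n (0, 0, 0) (rP i j) = (int i, (?Y + 1) mod int n, int j)"
    "phi n (0, 0, 0) (rP i j) = []"
    using rP_walk[of i j 0] assms n2 e by auto
  have sq: "walk n (int i, ?Y, int j) Tw = (int i, (?Y + 1) mod int n, int j)"
    "phi n (int i, ?Y, int j) Tw = ga n ((int i, ?Y, int j), False) @
        winv (ga n ((int i, (?Y + int i + 1) mod int n, int j + 1), False))"
    using square[of "int i" "int j" ?Y] assms n2 by auto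
  have V: "(0,0,0) \<in> VV n" using assms n2 by (auto simp: VV_def)
  have wp: "walk n (int i, (?Y + 1) mod int n, int j) (winv (rP i j)) = (0, 0, 0)"
    "phi n (int i, (?Y + 1) mod int n, int j) (winv (rP i j)) = []"
    using walk_winv[OF n1' V(1), of "rP i j"] phi_winv[OF n2 V(1), of "rP i j"] p1 by auto
  show "walk n (0, 0, 0) (rA3 n i j) = (0, 0, 0)" using t p sq wp by (simp add: rA3_def)
  show "phi n (0, 0, 0) (rA3 n i j) = ga n ((int i, ?Y, int j), False) @
        winv (ga n ((int i, (?Y + int i + 1) mod int n, int j + 1), False))"
    using t p sq wp by (simp add: rA3_def)
qed


end

definition pp :: "nat \<Rightarrow> vert \<Rightarrow> bool word" where
  "pp n v = (case v of (x, y, z) \<Rightarrow> pw Tw (nat ((y - x * z) mod int n)) @ pw aw (nat x) @ pw bw (nat z))"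

lemma pp0[simp]: "pp n (0, 0, 0) = []" by (simp add: pp_def)

lemma pw_nat_Suc: "0 \<le> x \<Longrightarrow> pw u (nat (x + 1)) = pw u (nat x) @ u"
  by (simp add: nat_add_distrib pw_Suc2[symmetric])

lemma pp_tree:
  assumes n2: "n \<ge> 2" and v: "v \<in> VV n" and t: "treeE n (v, g)"
  shows "red (pp n v @ [(g, False)]) = red (pp n (step n v (g, False)))"
proof -
  obtain x y z where xyz: "v = (x, y, z)" by (cases v) auto
  have b: "0 \<le> x" "x < int n" "0 \<le> y" "y < int n" "0 \<le> z" "z < int n" using v xyz by (auto simp: VV_def)
  show ?thesis
  proof (cases g)
    case True
    then have z: "z \<le> int n - 2" using t xyz by simp
    have s: "step n v (g, False) = (x, (y + x) mod int n, z + 1)"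
      using True xyz b z by (simp add: step_b)
    have e: "((y + x) mod int n - x * (z + 1)) mod int n = (y - x * z) mod int n"
      by (simp add: mod_simps algebra_simps)
    show ?thesis using s e b True xyz by (simp add: pp_def pw_nat_Suc bw_def)
  next
    case False
    then have c: "(z = 0 \<and> x \<le> int n - 2) \<or> (x = 0 \<and> z = 1 \<and> y \<noteq> 0)" using t xyz by simp
    then show ?thesis
    proof
      assume c1: "z = 0 \<and> x \<le> int n - 2"
      have s: "step n v (g, False) = (x + 1, y, 0)" using False xyz b c1 by (simp add: step_a)
      show ?thesis using s b c1 False xyz by (simp add: pp_def pw_nat_Suc aw_def)
    next
      assume c2: "x = 0 \<and> z = 1 \<and> y \<noteq> 0"
      have s: "step n v (g, False) = (1, y, 1)" using False xyz b c2 n2 by (simp add: step_a)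
      have y1: "(y - 1) mod int n = y - 1" using b c2 by simp
      have py: "pw Tw (nat y) = pw Tw (nat (y - 1)) @ Tw" using pw_nat_Suc[of "y - 1" Tw] b c2 by simp
      have ym: "y mod int n = y" using b by simp
      have "red (pp n v @ [(g, False)]) = red ((pw Tw (nat (y - 1)) @ [(False, False), (True, False), (False, True)]) @
             [(True, True), inv_l (True, True)] @ [(False, False)])"
      proof -
        have "pp n v @ [(g, False)] = pw Tw (nat (y - 1)) @ Tw @ bw @ aw"
          using xyz c2 False by (simp add: pp_def py bw_def aw_def ym pw_Suc)
        then show ?thesis by (simp add: Tw_def bw_def aw_def inv_l_def)
      qed
      also have "\<dots> = red ((pw Tw (nat (y - 1)) @ [(False, False), (True, False)]) @ [(False, True), inv_l (False, True)] @ [])"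
        using red_cancel_pair[of "pw Tw (nat (y - 1)) @ [(False, False), (True, False), (False, True)]" "(True, True)" "[(False, False)]"]
        by (simp add: inv_l_def)
      also have "\<dots> = red (pw Tw (nat (y - 1)) @ [(False, False), (True, False)])"
        using red_cancel_pair[of "pw Tw (nat (y - 1)) @ [(False, False), (True, False)]" "(False, True)" "[]"]
        by (simp add: inv_l_def)
      also have "\<dots> = red (pp n (step n v (g, False)))"
        using s y1 by (simp add: pp_def aw_def bw_def pw_Suc)
      finally show ?thesis .
    qed
  qed
qed


definition eA1 :: "nat \<Rightarrow> nat \<Rightarrow> nat \<Rightarrow> bool word" where "eA1 n i k = red (rA1 n i k)"
definition eA2 :: "nat \<Rightarrow> nat \<Rightarrow> nat \<Rightarrow> bool word" where "eA2 n i k = red (rA2 n i k)"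
definition eA3 :: "nat \<Rightarrow> nat \<Rightarrow> nat \<Rightarrow> bool word" where "eA3 n i j = red (rA3 n i j)"
definition eA4 :: "nat \<Rightarrow> nat \<Rightarrow> nat \<Rightarrow> nat \<Rightarrow> bool word" where "eA4 n k i j = red (rA4 n k i j)"

definition rU :: "nat \<Rightarrow> nat \<Rightarrow> nat \<Rightarrow> nat \<Rightarrow> bool word" where
  "rU n k i j = (if k = n - 1 then rA3 n i j else rA4 n k i j)"
definition eU :: "nat \<Rightarrow> nat \<Rightarrow> nat \<Rightarrow> nat \<Rightarrow> bool word" where
  "eU n k i j = (if k = n - 1 then eA3 n i j else eA4 n k i j)"

lemma eU_red: "eU n k i j = red (rU n k i j)"
  by (simp add: eU_def rU_def eA3_def eA4_def)

fun thx :: "nat \<Rightarrow> int \<Rightarrow> int \<Rightarrow> nat \<Rightarrow> (bool word \<times> bool) list" where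
  "thx n x Y 0 = []"
| "thx n x Y (Suc z) = (if treeE n ((x, Y, int (Suc z)), False) then []
     else (eU n (nat ((Y - 1 - x * int (Suc z)) mod int n)) (nat x) z, True) # thx n x ((Y - x - 1) mod int n) z)"

definition th :: "nat \<Rightarrow> edge \<Rightarrow> (bool word \<times> bool) list" where
  "th n e = (case e of ((x, Y, z), g) \<Rightarrow>
     if g then (if treeE n e then [] else [(eA2 n (nat x) (nat ((Y + x) mod int n)), False)])
     else if x = int n - 1 then winv (concat (map (\<lambda>t. thx n (int t) Y (nat z)) [0..<n - 1])) @ [(eA1 n (nat z) (nat Y), False)]
     else thx n x Y (nat z))"

lemma thx_tree: "treeE n ((x, Y, int z), False) \<Longrightarrow> thx n x Y z = []"
  by (cases z) auto

lemma subst_ga: "subst f (ga n e) = (if treeE n e then [] else f e)"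
  by (simp add: ga_def)

lemma subst_concat_map: "subst f (concat (map g xs)) = concat (map (\<lambda>t. subst f (g t)) xs)"
  by (induction xs) auto

lemma modL4: "(((A::int) mod N + c) mod N - d) mod N = (A + c - d) mod N"
  by (metis mod_add_left_eq mod_diff_left_eq)

context fixes n :: nat assumes n2: "n \<ge> 2"
begin

lemma rU_walk:
  assumes "k \<le> n - 1" "i \<le> n - 2" "j \<le> n - 2"
  shows "walk n (0, 0, 0) (rU n k i j) = (0, 0, 0)"
    "phi n (0, 0, 0) (rU n k i j) = ga n ((int i, (int k + int i * int j) mod int n, int j), False) @
        winv (ga n ((int i, ((int k + int i * int j) mod int n + int i + 1) mod int n, int j + 1), False))"
proof -
  show "walk n (0, 0, 0) (rU n k i j) = (0, 0, 0)"
    using rA3_walk[OF n2, of i j] rA4_walk[OF n2, of k i j] assms by (auto simp: rU_def)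
  show "phi n (0, 0, 0) (rU n k i j) = ga n ((int i, (int k + int i * int j) mod int n, int j), False) @
        winv (ga n ((int i, ((int k + int i * int j) mod int n + int i + 1) mod int n, int j + 1), False))"
  proof (cases "k = n - 1")
    case True then show ?thesis using rA3_walk[OF n2, of i j] assms by (simp add: rU_def)
  next
    case False then show ?thesis using rA4_walk[OF n2, of k i j] assms by (simp add: rU_def)
  qed
qed

lemma F_A1:
  assumes "i \<le> n - 1" "k \<le> n - 1"
  shows "red (subst (th n) (phi n (0, 0, 0) (rA1 n i k))) = [(eA1 n i k, False)]"
proof -
  let ?C = "concat (map (\<lambda>t. thx n (int t) (int k) i) [0..<n - 1])"
  have nn: "[0..<n] = [0..<n - 1] @ [n - 1]" using n2
    using n2 by (cases n) auto
  have low: "subst (th n) (ga n ((int t, int k, int i), False)) = thx n (int t) (int k) i" if "t < n - 1" for t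
    using that n2 by (auto simp: subst_ga th_def thx_tree)
  have top: "subst (th n) (ga n ((int (n - 1), int k, int i), False)) = winv ?C @ [(eA1 n i k, False)]"
    using n2 by (simp add: subst_ga th_def of_nat_diff)
  have m: "map (\<lambda>t. subst (th n) (ga n ((int t, int k, int i), False))) [0..<n - 1] =
      map (\<lambda>t. thx n (int t) (int k) i) [0..<n - 1]"
    by (rule map_cong) (auto simp: low)
  have "subst (th n) (phi n (0, 0, 0) (rA1 n i k)) = ?C @ winv ?C @ [(eA1 n i k, False)]"
  proof -
    have e: "phi n (0, 0, 0) (rA1 n i k) = concat (map (\<lambda>t. ga n ((int t, int k, int i), False)) [0..<n - 1])
         @ ga n ((int (n - 1), int k, int i), False)"
      unfolding rA1_walk(2)[OF n2 assms] by (subst nn) simp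
    show ?thesis unfolding e subst_append subst_concat_map m top by simp
  qed
  then show ?thesis by (simp add: red_winv_right red_reduced)
qed

lemma F_A2:
  assumes "i \<le> n - 1" "k \<le> n - 1"
  shows "red (subst (th n) (phi n (0, 0, 0) (rA2 n i k))) = [(eA2 n i k, False)]"
proof -
  have e: "((int k + int i * (int n - 1)) mod int n + int i) mod int n = int k"
  proof -
    have "((int k + int i * (int n - 1)) mod int n + int i) mod int n = (int k + int i * (int n - 1) + int i) mod int n"
      by (simp add: mod_add_left_eq)
    also have "int k + int i * (int n - 1) + int i = int k + int i * int n" by (simp add: algebra_simps)
    finally show ?thesis using assms n2 by simp
  qed
  show ?thesis unfolding rA2_walk(2)[OF n2 assms] using e n2 by (simp add: th_def red_reduced)
qed

lemma F_U:
  assumes "k \<le> n - 1" "i \<le> n - 2" "j \<le> n - 2" "k = n - 1 \<or> (i, j) \<noteq> (0, 0)"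
  shows "red (subst (th n) (phi n (0, 0, 0) (rU n k i j))) = [(eU n k i j, False)]"
proof -
  define Y where "Y = (int k + int i * int j) mod int n"
  define Y2 where "Y2 = (Y + int i + 1) mod int n"
  have f1: "subst (th n) (ga n ((int i, Y, int j), False)) = thx n (int i) Y j"
    using assms n2 by (auto simp: subst_ga th_def thx_tree)
  have nt: "\<not> treeE n ((int i, Y2, int j + 1), False)"
  proof
    assume "treeE n ((int i, Y2, int j + 1), False)"
    then have ij: "i = 0" "j = 0" and Y2: "Y2 \<noteq> 0" by auto
    then have "k = n - 1" using assms(4) by auto
    then have "int k + 1 = int n" using n2 by auto
    then have "Y2 = 0" using ij by (simp add: Y2_def Y_def mod_add_left_eq add.commute)
    then show False using Y2 by simp
  qed
  have k': "nat ((Y2 - 1 - int i * int (Suc j)) mod int n) = k"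
  proof -
    have "(Y2 - 1 - int i * int (Suc j)) mod int n =
       (((int k + int i * int j) mod int n + (int i + 1)) mod int n - (1 + int i * int (Suc j))) mod int n"
      by (simp add: Y2_def Y_def algebra_simps)
    also have "\<dots> = ((int k + int i * int j) + (int i + 1) - (1 + int i * int (Suc j))) mod int n"
      by (rule modL4)
    also have "(int k + int i * int j) + (int i + 1) - (1 + int i * int (Suc j)) = int k" by (simp add: algebra_simps)
    finally have "(Y2 - 1 - int i * int (Suc j)) mod int n = int k mod int n" .
    then show ?thesis using assms n2 by simp
  qed
  have Y': "(Y2 - int i - 1) mod int n = Y"
  proof -
    have "(Y2 - int i - 1) mod int n = ((Y + (int i + 1)) mod int n - (int i + 1)) mod int n"
      by (simp add: Y2_def algebra_simps)
    also have "\<dots> = Y mod int n" by (simp add: mod_diff_left_eq)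
    finally have "(Y2 - int i - 1) mod int n = Y mod int n" .
    then show ?thesis by (simp add: Y_def)
  qed
  have f2: "subst (th n) (winv (ga n ((int i, Y2, int j + 1), False))) =
     winv ((eU n k i j, True) # thx n (int i) Y j)"
  proof -
    have "subst (th n) (winv (ga n ((int i, Y2, int j + 1), False))) = winv (th n ((int i, Y2, int j + 1), False))"
      unfolding subst_winv subst_ga if_not_P[OF nt] ..
    also have "th n ((int i, Y2, int j + 1), False) = thx n (int i) Y2 (Suc j)"
      using assms n2 by (simp add: th_def nat_add_distrib)
    also have "\<dots> = (eU n k i j, True) # thx n (int i) Y j"
      using nt k' Y' by (simp add: add.commute)
    finally show ?thesis .
  qed
  have "subst (th n) (phi n (0, 0, 0) (rU n k i j)) = thx n (int i) Y j @ winv (thx n (int i) Y j) @ [(eU n k i j, False)]"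
    unfolding rU_walk(2)[OF assms(1-3)] Y_def[symmetric] Y2_def[symmetric] subst_append f1 f2
    by (simp add: winv_Cons inv_l_def)
  then show ?thesis by (simp add: red_winv_right red_reduced)
qed

end


definition Rw :: "(bool word \<times> bool) list \<Rightarrow> bool word" where "Rw L = subst (\<lambda>s. s) L"

lemma red_concat_cong: "(\<And>t. t \<in> set xs \<Longrightarrow> red (f t) = red (g t)) \<Longrightarrow>
    red (concat (map f xs)) = red (concat (map g xs))"
proof (induction xs)
  case (Cons a xs)
  then show ?case using red_cong_append[of "f a" "g a" "concat (map f xs)" "concat (map g xs)"] by simp
qed simp

definition A1s :: "nat \<Rightarrow> bool word set" where "A1s n = {eA1 n i k | i k. i \<le> n - 1 \<and> k \<le> n - 1}"
definition A2s :: "nat \<Rightarrow> bool word set" where "A2s n = {eA2 n i k | i k. i \<le> n - 1 \<and> k \<le> n - 1}"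
definition A3s :: "nat \<Rightarrow> bool word set" where "A3s n = {eA3 n i j | i j. i \<le> n - 2 \<and> j \<le> n - 2}"
definition A4s :: "nat \<Rightarrow> bool word set" where
  "A4s n = {eA4 n k i j | k i j. k \<le> n - 2 \<and> i \<le> n - 2 \<and> j \<le> n - 2 \<and> (i, j) \<noteq> (0, 0)}"
definition SS :: "nat \<Rightarrow> bool word set" where "SS n = A1s n \<union> A2s n \<union> A3s n \<union> A4s n"

context fixes n :: nat assumes n2: "n \<ge> 2"
begin

lemma n1'': "n \<ge> 1" using n2 by simp

abbreviation "PS \<equiv> psi n (pp n)"

lemma psi_tree: "v \<in> VV n \<Longrightarrow> treeE n (v, g) \<Longrightarrow> red (PS (v, g)) = []"
proof -
  assume v: "v \<in> VV n" and t: "treeE n (v, g)"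
  have "red (PS (v, g)) = red (red (pp n v @ [(g, False)]) @ winv (pp n (step n v (g, False))))"
    by (simp add: psi_def)
  also have "\<dots> = red (red (pp n (step n v (g, False))) @ winv (pp n (step n v (g, False))))"
    using pp_tree[OF n2 v t] by simp
  also have "\<dots> = []" by simp
  finally show ?thesis .
qed

lemma subst_psi_ga: "v \<in> VV n \<Longrightarrow> red (subst PS (ga n (v, g))) = red (PS (v, g))"
  using psi_tree by (auto simp: ga_def)

lemma tele0: "walk n (0, 0, 0) u = (0, 0, 0) \<Longrightarrow> red u = red (subst PS (phi n (0, 0, 0) u))"
proof -
  assume w: "walk n (0, 0, 0) u = (0, 0, 0)"
  have V: "(0, 0, 0) \<in> VV n" using n2 by (simp add: VV_def)
  have "red (pp n (0,0,0) @ u) = red (subst PS (phi n (0,0,0) u) @ pp n (walk n (0,0,0) u))"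
    by (rule telescope[OF n2 pp_tree[OF n2] V])
  then show ?thesis using w by simp
qed

lemma G_low:
  assumes x: "0 \<le> x" "x \<le> int n - 2" and Y: "0 \<le> Y" "Y < int n" and z: "z \<le> n - 1"
  shows "red (Rw (thx n x Y z)) = red (PS ((x, Y, int z), False))"
  using Y z
proof (induction z arbitrary: Y)
  case 0
  then show ?case using psi_tree[of "(x, Y, 0)" False] x n2 by (simp add: Rw_def VV_def)
next
  case (Suc z)
  have V: "(x, Y, int (Suc z)) \<in> VV n" using Suc.prems x by (auto simp: VV_def)
  show ?case
  proof (cases "treeE n ((x, Y, int (Suc z)), False)")
    case True
    then show ?thesis using psi_tree[OF V] by (simp add: Rw_def)
  next
    case False
    define k where "k = nat ((Y - 1 - x * int (Suc z)) mod int n)"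
    define Y' where "Y' = (Y - x - 1) mod int n"
    have kn: "k \<le> n - 1" using n2 by (simp add: k_def nat_le_iff)
    have ik: "int k = (Y - 1 - x * int (Suc z)) mod int n" using n2 by (simp add: k_def)
    have Y'r: "0 \<le> Y'" "Y' < int n" using n2 by (auto simp: Y'_def)
    have xn: "nat x \<le> n - 2" "int (nat x) = x" using x by auto
    have zn: "z \<le> n - 2" "z \<le> n - 1" using Suc.prems by auto
    have e1: "(int k + x * int z) mod int n = Y'"
    proof -
      have "(int k + x * int z) mod int n = ((Y - 1 - x * int (Suc z)) mod int n + x * int z) mod int n"
        by (simp add: ik)
      also have "\<dots> = (Y - 1 - x * int (Suc z) + x * int z) mod int n" by (simp add: mod_add_left_eq)
      also have "Y - 1 - x * int (Suc z) + x * int z = Y - x - 1" by (simp add: algebra_simps)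
      finally show ?thesis by (simp add: Y'_def)
    qed
    have e2: "(Y' + x + 1) mod int n = Y"
    proof -
      have "(Y' + x + 1) mod int n = ((Y - (x + 1)) mod int n + (x + 1)) mod int n" by (simp add: Y'_def algebra_simps)
      also have "\<dots> = Y mod int n" by (simp add: mod_add_left_eq)
      finally show ?thesis using Suc.prems by simp
    qed
    let ?f1 = "((x, Y', int z), False)"
    let ?f2 = "((x, Y, int z + 1), False)"
    have V1: "(x, Y', int z) \<in> VV n" using Y'r x Suc.prems by (auto simp: VV_def)
    have ph: "phi n (0, 0, 0) (rU n k (nat x) z) = ga n ?f1 @ winv (ga n ?f2)"
      using rU_walk(2)[OF n2 kn xn(1) zn(1)] e1 e2 xn(2) by simp
    have wk: "walk n (0, 0, 0) (rU n k (nat x) z) = (0, 0, 0)"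
      using rU_walk(1)[OF n2 kn xn(1) zn(1)] .
    have "red (eU n k (nat x) z) = red (subst PS (ga n ?f1 @ winv (ga n ?f2)))"
      using tele0[OF wk] ph by (simp add: eU_red)
    also have "\<dots> = red (subst PS (ga n ?f1) @ winv (subst PS (ga n ?f2)))" by (simp add: subst_winv)
    also have "\<dots> = red (PS ?f1 @ winv (PS ?f2))"
      apply (rule red_cong_append)
       apply (rule subst_psi_ga[OF V1])
      apply (rule red_winv_cong)
      using subst_psi_ga[OF V] by (simp add: add.commute)
    finally have eU: "red (eU n k (nat x) z) = red (PS ?f1 @ winv (PS ?f2))" .
    have eUi: "red (winv (eU n k (nat x) z)) = red (PS ?f2 @ winv (PS ?f1))"
      using red_winv_cong[OF eU] by simp
    have th: "thx n x Y (Suc z) = (eU n k (nat x) z, True) # thx n x Y' z"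
      unfolding thx.simps(2) if_not_P[OF False] k_def Y'_def ..
    have IH: "red (Rw (thx n x Y' z)) = red (PS ?f1)" using Suc.IH[OF Y'r] zn by simp
    have "red (Rw (thx n x Y (Suc z))) = red (winv (eU n k (nat x) z) @ Rw (thx n x Y' z))"
      unfolding th Rw_def subst_Cons by simp
    also have "\<dots> = red ((PS ?f2 @ winv (PS ?f1)) @ PS ?f1)"
      using red_cong_append[OF eUi IH] by simp
    also have "\<dots> = red (PS ?f2)" by (metis append_assoc append_Nil2 red_append_red2 red_winv_left0)
    finally show ?thesis by (simp add: add.commute)
  qed
qed


lemma G_top:
  assumes Y: "0 \<le> Y" "Y < int n" and z: "0 \<le> z" "z < int n"
  shows "red (Rw (th n ((int n - 1, Y, z), False))) = red (PS ((int n - 1, Y, z), False))"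
proof -
  let ?C = "concat (map (\<lambda>t. thx n (int t) Y (nat z)) [0..<n - 1])"
  let ?PC = "concat (map (\<lambda>t. PS ((int t, Y, z), False)) [0..<n - 1])"
  let ?last = "PS ((int n - 1, Y, z), False)"
  have nn: "[0..<n] = [0..<n - 1] @ [n - 1]" using n2 by (cases n) auto
  have thE: "th n ((int n - 1, Y, z), False) = winv ?C @ [(eA1 n (nat z) (nat Y), False)]"
    by (simp add: th_def)
  have RwC: "red (Rw ?C) = red ?PC"
    unfolding Rw_def subst_concat_map
    apply (rule red_concat_cong)
    using G_low[of "int t" Y "nat z" for t] Y z n2 by (auto simp: Rw_def)
  have a: "i \<le> n - 1" "k \<le> n - 1" "int k = Y" "int i = z" if "i = nat z" "k = nat Y" for i k
    using that Y z by auto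
  have ph: "phi n (0, 0, 0) (rA1 n (nat z) (nat Y)) = concat (map (\<lambda>t. ga n ((int t, Y, z), False)) [0..<n])"
    using rA1_walk(2)[OF n2, of "nat z" "nat Y"] Y z by simp
  have wk: "walk n (0, 0, 0) (rA1 n (nat z) (nat Y)) = (0, 0, 0)"
    using rA1_walk(1)[OF n2, of "nat z" "nat Y"] Y z by simp
  have "red (eA1 n (nat z) (nat Y)) = red (subst PS (concat (map (\<lambda>t. ga n ((int t, Y, z), False)) [0..<n])))"
    using tele0[OF wk] ph by (simp add: eA1_def)
  also have "\<dots> = red (concat (map (\<lambda>t. PS ((int t, Y, z), False)) [0..<n]))"
    unfolding subst_concat_map
    apply (rule red_concat_cong)
    apply (rule subst_psi_ga)
    using Y z by (auto simp: VV_def)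
  also have "concat (map (\<lambda>t. PS ((int t, Y, z), False)) [0..<n]) = ?PC @ ?last"
  proof -
    have i1: "int (n - 1) = int n - 1" using n2 by simp
    show ?thesis by (subst nn) (simp only: map_append concat_append list.map concat.simps i1 append_Nil2)
  qed
  finally have e: "red (eA1 n (nat z) (nat Y)) = red (?PC @ ?last)" .
  have "red (Rw (th n ((int n - 1, Y, z), False))) = red (winv (Rw ?C) @ eA1 n (nat z) (nat Y))"
    unfolding thE Rw_def by (simp add: subst_winv)
  also have "\<dots> = red (winv ?PC @ (?PC @ ?last))"
    by (rule red_cong_append[OF red_winv_cong[OF RwC] e])
  also have "\<dots> = red ?last" by (rule red_winv_left)
  finally show ?thesis .
qed

lemma G_b:
  assumes v: "(x, y, z) \<in> VV n" and nt: "\<not> treeE n ((x, y, z), True)"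
  shows "red (PS ((x, y, z), True)) = red (Rw (th n ((x, y, z), True)))"
proof -
  have b: "0 \<le> x" "x < int n" "0 \<le> y" "y < int n" "0 \<le> z" "z < int n" using v by (auto simp: VV_def)
  have zN: "z = int n - 1" using nt b by simp
  define y0 where "y0 = (y + x) mod int n"
  have st: "step n (x, y, z) (True, False) = (x, y0, 0)" using b zN by (simp add: step_b y0_def)
  have e1: "(y - x * z) mod int n = y0"
  proof -
    have xz: "x * z = x * int n - x" using zN by (simp add: right_diff_distrib)
    have "y - x * z = (y + x) + (- x) * int n" using xz by simp
    then show ?thesis unfolding y0_def by (metis mod_mult_self1)
  qed
  have e2: "(y0 - x * 0) mod int n = y0" by (simp add: y0_def)
  have nz: "nat z = n - 1" using zN by simp
  have pb: "pw bw (n - 1) @ [(True, False)] = pw bw n"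
  proof -
    obtain m where "n = Suc m" using n2 by (cases n) auto
    then show ?thesis by (simp add: pw_Suc2 bw_def)
  qed
  have "PS ((x, y, z), True) = rA2 n (nat x) (nat y0)"
    unfolding psi_def using st e1 e2 nz pb by (simp add: pp_def rA2_def)
  moreover have "th n ((x, y, z), True) = [(eA2 n (nat x) (nat y0), False)]"
    using nt by (simp add: th_def y0_def del: treeE.simps)
  ultimately show ?thesis by (simp add: Rw_def eA2_def)
qed

lemma G_all:
  assumes v: "v \<in> VV n"
  shows "red (PS (v, g)) = red (Rw (th n (v, g)))"
proof -
  obtain x y z where xyz: "v = (x, y, z)" by (cases v) auto
  have b: "0 \<le> x" "x < int n" "0 \<le> y" "y < int n" "0 \<le> z" "z < int n" using v xyz by (auto simp: VV_def)
  show ?thesis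
  proof (cases g)
    case True
    show ?thesis
    proof (cases "treeE n (v, g)")
      case tr: True
      then show ?thesis using psi_tree[OF v tr] True xyz by (simp add: th_def Rw_def)
    next
      case False then show ?thesis using G_b v xyz True by simp
    qed
  next
    case False
    show ?thesis
    proof (cases "x = int n - 1")
      case True
      then show ?thesis using G_top[of y z] b xyz False by simp
    next
      case xn: False
      have "th n (v, g) = thx n x y (nat z)" using xn xyz False by (simp add: th_def)
      then show ?thesis using G_low[of x y "nat z"] b xn xyz False by simp
    qed
  qed
qed

lemma thx_mem:
  assumes x: "0 \<le> x" "x \<le> int n - 2" and Y: "0 \<le> Y" "Y < int n" and z: "z \<le> n - 1"
  shows "fst ` set (thx n x Y z) \<subseteq> SS n"
  using Y z
proof (induction z arbitrary: Y)
  case 0 then show ?case by simp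
next
  case (Suc z)
  show ?case
  proof (cases "treeE n ((x, Y, int (Suc z)), False)")
    case True then show ?thesis by simp
  next
    case False
    define k where "k = nat ((Y - 1 - x * int (Suc z)) mod int n)"
    define Y' where "Y' = (Y - x - 1) mod int n"
    have kn: "k \<le> n - 1" using n2 by (simp add: k_def nat_le_iff)
    have Y'r: "0 \<le> Y'" "Y' < int n" using n2 by (auto simp: Y'_def)
    have th: "thx n x Y (Suc z) = (eU n k (nat x) z, True) # thx n x Y' z"
      unfolding thx.simps(2) if_not_P[OF False] k_def Y'_def ..
    have IH: "fst ` set (thx n x Y' z) \<subseteq> SS n" using Suc.IH[OF Y'r] Suc.prems by simp
    have mem: "eU n k (nat x) z \<in> SS n"
    proof (cases "k = n - 1")
      case True
      then have "eU n k (nat x) z = eA3 n (nat x) z" by (simp add: eU_def)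
      moreover have "nat x \<le> n - 2" "z \<le> n - 2" using x Suc.prems by auto
      ultimately show ?thesis by (auto simp: SS_def A3s_def)
    next
      case kF: False
      then have "eU n k (nat x) z = eA4 n k (nat x) z" by (simp add: eU_def)
      moreover have "nat x \<le> n - 2" "z \<le> n - 2" "k \<le> n - 2" using x Suc.prems kn kF by auto
      moreover have "(nat x, z) \<noteq> (0, 0)"
      proof
        assume "(nat x, z) = (0, 0)"
        then have x0: "x = 0" "z = 0" using x by auto
        then have "Y = 0" using False by auto
        then have "k = n - 1" using x0 n2 by (simp add: k_def zmod_minus1 nat_diff_distrib)
        then show False using kF by simp
      qed
      ultimately show ?thesis unfolding SS_def A4s_def by blast
    qed
    show ?thesis using th IH mem by simp
  qed
qed

lemma th_mem:
  assumes v: "v \<in> VV n"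
  shows "fst ` set (th n (v, g)) \<subseteq> SS n"
proof -
  obtain x y z where xyz: "v = (x, y, z)" by (cases v) auto
  have b: "0 \<le> x" "x < int n" "0 \<le> y" "y < int n" "0 \<le> z" "z < int n" using v xyz by (auto simp: VV_def)
  show ?thesis
  proof (cases g)
    case True
    have l: "nat x \<le> n - 1" "nat ((y + x) mod int n) \<le> n - 1" using b n2 by (auto simp: nat_le_iff)
    have "eA2 n (nat x) (nat ((y + x) mod int n)) \<in> A2s n"
      unfolding A2s_def using l by blast
    then have "eA2 n (nat x) (nat ((y + x) mod int n)) \<in> SS n" by (simp add: SS_def)
    then show ?thesis using True xyz by (auto simp: th_def)
  next
    case False
    show ?thesis
    proof (cases "x = int n - 1")
      case True
      have m1: "fst ` set (thx n (int t) y (nat z)) \<subseteq> SS n" if "t < n - 1" for t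
        using thx_mem[of "int t" y "nat z"] that b by auto
      have l: "nat z \<le> n - 1" "nat y \<le> n - 1" using b n2 by (auto simp: nat_le_iff)
      have "eA1 n (nat z) (nat y) \<in> A1s n" unfolding A1s_def using l by blast
      then have m2: "eA1 n (nat z) (nat y) \<in> SS n" by (simp add: SS_def)
      have "fst ` set (winv (concat (map (\<lambda>t. thx n (int t) y (nat z)) [0..<n - 1]))) \<subseteq> SS n"
      proof -
        have "fst ` set (concat (map (\<lambda>t. thx n (int t) y (nat z)) [0..<n - 1])) \<subseteq> SS n"
          using m1 by fastforce
        then show ?thesis by (simp only: fst_set_winv)
      qed
      then show ?thesis using True False xyz m2 by (simp add: th_def)
    next
      case xn: False
      have "th n (v, g) = thx n x y (nat z)" using xn xyz False by (simp add: th_def)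
      then show ?thesis using thx_mem[of x y "nat z"] b xn by simp
    qed
  qed
qed

end


lemma subst_subst: "subst g (subst f L) = subst (\<lambda>x. subst g (f x)) L"
  by (induction L) (auto simp: subst_Cons subst_winv)

lemma subst_single_id: "subst (\<lambda>s. [(s, False)]) w = w"
  by (induction w) (auto simp: subst_Cons inv_l_def)

lemma fst_set_subst: "fst ` set (subst f L) \<subseteq> (\<Union>e \<in> fst ` set L. fst ` set (f e))"
proof (induction L)
  case (Cons l L)
  have "fst ` set (if snd l then winv (f (fst l)) else f (fst l)) = fst ` set (f (fst l))" by simp
  then show ?case using Cons unfolding subst_Cons set_append image_Un by auto
qed simp

lemma eval_word_F2: "fst ` set w \<subseteq> carrier F2 \<Longrightarrow> eval_word F2 w = red (Rw w)"
proof (induction w)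
  case Nil then show ?case by (simp add: eval_word_def F2_one Rw_def)
next
  case (Cons l w)
  obtain s e where l: "l = (s, e)" by (cases l) auto
  have s: "reduced s" using Cons.prems l by (auto simp: F2_carrier)
  have ev: "eval_word F2 (l # w) = (if e then inv\<^bsub>F2\<^esub> s else s) \<otimes>\<^bsub>F2\<^esub> eval_word F2 w"
    using l by (simp add: eval_word_def)
  have IH: "eval_word F2 w = red (Rw w)" using Cons by simp
  have "(if e then inv\<^bsub>F2\<^esub> s else s) = red (if e then winv s else s)"
    using s by (simp add: F2_inv red_reduced reduced_winv)
  then show ?case using ev IH l by (simp add: Rw_def subst_Cons)
qed

lemma eval_word_generate: "fst ` set w \<subseteq> S \<Longrightarrow> S \<subseteq> carrier F2 \<Longrightarrow> eval_word F2 w \<in> generate F2 S"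
proof (induction w)
  case Nil then show ?case by (simp add: eval_word_def generate.one)
next
  case (Cons l w)
  obtain s e where l: "l = (s, e)" by (cases l) auto
  have sS: "s \<in> S" using Cons.prems l by auto
  have g: "(if e then inv\<^bsub>F2\<^esub> s else s) \<in> generate F2 S"
    using sS by (auto intro: generate.incl generate.inv)
  have "eval_word F2 (l # w) = (if e then inv\<^bsub>F2\<^esub> s else s) \<otimes>\<^bsub>F2\<^esub> eval_word F2 w"
    using l by (simp add: eval_word_def)
  then show ?case using g Cons by (auto intro: generate.eng)
qed

context fixes n :: nat assumes n2: "n \<ge> 2"
begin

lemma V0: "(0, 0, 0) \<in> VV n" using n2 by (simp add: VV_def)

lemma red_phi_subst: "red (subst f (phi n (0, 0, 0) (red u))) = red (subst f (phi n (0, 0, 0) u))"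
  by (metis phi_red[OF n2 V0] subst_red)

lemma SS_F:
  assumes s: "s \<in> SS n"
  shows "s \<in> carrier F2 \<and> walk n (0, 0, 0) s = (0, 0, 0) \<and> red (subst (th n) (phi n (0, 0, 0) s)) = [(s, False)]"
proof -
  have n1: "n \<ge> 1" using n2 by simp
  have gen: "red u \<in> carrier F2 \<and> walk n (0, 0, 0) (red u) = (0, 0, 0) \<and> red (subst (th n) (phi n (0, 0, 0) (red u))) = [(red u, False)]"
    if "walk n (0, 0, 0) u = (0, 0, 0)" "red (subst (th n) (phi n (0, 0, 0) u)) = [(red u, False)]" for u
  proof -
    have "red (subst (th n) (phi n (0, 0, 0) (red u))) = red (subst (th n) (phi n (0, 0, 0) u))"
      by (rule red_phi_subst)
    then show ?thesis using that walk_red[OF n1 V0, of u] by simp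
  qed
  from s show ?thesis unfolding SS_def A1s_def A2s_def A3s_def A4s_def
  proof (elim UnE CollectE exE conjE)
    fix i k assume "s = eA1 n i k" "i \<le> n - 1" "k \<le> n - 1"
    then show ?thesis using gen[of "rA1 n i k"] rA1_walk[OF n2] F_A1[OF n2] by (simp add: eA1_def)
  next
    fix i k assume "s = eA2 n i k" "i \<le> n - 1" "k \<le> n - 1"
    then show ?thesis using gen[of "rA2 n i k"] rA2_walk[OF n2] F_A2[OF n2] by (simp add: eA2_def)
  next
    fix i j assume a: "s = eA3 n i j" "i \<le> n - 2" "j \<le> n - 2"
    have "rU n (n - 1) i j = rA3 n i j" "eU n (n - 1) i j = eA3 n i j" by (simp_all add: rU_def eU_def)
    then show ?thesis using a gen[of "rA3 n i j"] rU_walk[OF n2, of "n - 1" i j] F_U[OF n2, of "n - 1" i j]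
      by (simp add: eA3_def)
  next
    fix k i j assume a: "s = eA4 n k i j" "k \<le> n - 2" "i \<le> n - 2" "j \<le> n - 2" "(i, j) \<noteq> (0, 0)"
    have kk: "k \<noteq> n - 1" "k \<le> n - 1" using a n2 by auto
    have "rU n k i j = rA4 n k i j" "eU n k i j = eA4 n k i j" using kk by (simp_all add: rU_def eU_def)
    then show ?thesis using a kk gen[of "rA4 n k i j"] rU_walk[OF n2, of k i j] F_U[OF n2, of k i j]
      by (simp add: eA4_def)
  qed
qed

lemma SS_carrier: "SS n \<subseteq> carrier F2" using SS_F by blast

lemma loops_Rw:
  assumes "\<And>s. s \<in> fst ` set w \<Longrightarrow> walk n (0, 0, 0) s = (0, 0, 0)"
  shows "walk n (0, 0, 0) (Rw w) = (0, 0, 0) \<and> phi n (0, 0, 0) (Rw w) = subst (phi n (0, 0, 0)) w"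
  using assms
proof (induction w)
  case Nil then show ?case by (simp add: Rw_def)
next
  case (Cons l w)
  have n1: "n \<ge> 1" using n2 by simp
  obtain s e where l: "l = (s, e)" by (cases l) auto
  have ws: "walk n (0, 0, 0) s = (0, 0, 0)" using Cons.prems l by auto
  have wi: "walk n (0, 0, 0) (winv s) = (0, 0, 0)" using walk_winv[OF n1 V0, of s] ws by simp
  have pi: "phi n (0, 0, 0) (winv s) = winv (phi n (0, 0, 0) s)" using phi_winv[OF n2 V0, of s] ws by simp
  have IH: "walk n (0, 0, 0) (Rw w) = (0, 0, 0) \<and> phi n (0, 0, 0) (Rw w) = subst (phi n (0, 0, 0)) w"
    using Cons by simp
  have R: "Rw (l # w) = (if e then winv s else s) @ Rw w" using l by (simp add: Rw_def subst_Cons)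
  show ?case using IH ws wi pi l unfolding R by (auto simp: subst_Cons)
qed

theorem SS_free: "free_basis F2 (SS n)"
  unfolding free_basis_def
proof (intro conjI allI impI)
  show "SS n \<subseteq> carrier F2" by (rule SS_carrier)
  fix w :: "(bool word \<times> bool) list"
  assume w: "w \<noteq> [] \<and> reduced w \<and> fst ` set w \<subseteq> SS n"
  show "eval_word F2 w \<noteq> \<one>\<^bsub>F2\<^esub>"
  proof
    assume ev: "eval_word F2 w = \<one>\<^bsub>F2\<^esub>"
    have ws: "walk n (0, 0, 0) s = (0, 0, 0)" if "s \<in> fst ` set w" for s
      using SS_F w that by blast
    have wc: "fst ` set w \<subseteq> carrier F2" using w SS_carrier by blast
    have r: "red (Rw w) = []" using ev eval_word_F2[OF wc] by (simp add: F2_one)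
    have "[] = red (subst (th n) (phi n (0, 0, 0) (red (Rw w))))" using r by simp
    also have "\<dots> = red (subst (th n) (phi n (0, 0, 0) (Rw w)))" by (rule red_phi_subst)
    also have "\<dots> = red (subst (\<lambda>s. subst (th n) (phi n (0, 0, 0) s)) w)"
      using loops_Rw[OF ws] by (simp add: subst_subst)
    also have "\<dots> = red (subst (\<lambda>s. [(s, False)]) w)"
      by (rule subst_cong) (use SS_F w in \<open>auto simp: red_reduced\<close>)
    also have "\<dots> = w" using w by (simp add: subst_single_id red_reduced)
    finally show False using w by simp
  qed
qed

lemma phi_VV: "v \<in> VV n \<Longrightarrow> e \<in> fst ` set (phi n v u) \<Longrightarrow> fst e \<in> VV n"
proof (induction u arbitrary: v)
  case Nil then show ?case by simp
next
  case (Cons l u)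
  have n1: "n \<ge> 1" using n2 by simp
  have sv: "step n v l \<in> VV n" using step_VV[OF n1] .
  show ?case
  proof (cases "e \<in> fst ` set (gam n v l)")
    case True then show ?thesis using Cons.prems sv by (auto simp: gam_def Let_def split: if_splits)
  next
    case False then show ?thesis using Cons.IH[OF sv] Cons.prems(2) by auto
  qed
qed

theorem SS_gen:
  assumes k: "k \<in> carrier F2" and wk: "walk n (0, 0, 0) k = (0, 0, 0)"
  shows "k \<in> generate F2 (SS n)"
proof -
  let ?L = "phi n (0, 0, 0) k"
  let ?W = "subst (th n) ?L"
  have "k = red k" using k by (simp add: F2_carrier red_reduced)
  also have "\<dots> = red (subst (psi n (pp n)) ?L)" using tele0[OF n2 wk] .
  also have "\<dots> = red (subst (\<lambda>e. Rw (th n e)) ?L)"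
  proof (rule subst_cong)
    fix e assume "e \<in> fst ` set ?L"
    then have "fst e \<in> VV n" using phi_VV[OF V0] by blast
    then show "red (psi n (pp n) e) = red (Rw (th n e))" using G_all[OF n2, of "fst e" "snd e"] by simp
  qed
  also have "\<dots> = red (Rw ?W)" by (simp add: Rw_def subst_subst)
  also have "\<dots> = eval_word F2 ?W"
  proof -
    have "fst ` set ?W \<subseteq> SS n"
    proof -
      have "fst ` set (th n e) \<subseteq> SS n" if "e \<in> fst ` set ?L" for e
      proof -
        have "fst e \<in> VV n" using phi_VV[OF V0] that by blast
        then show ?thesis using th_mem[OF n2, of "fst e" "snd e"] by simp
      qed
      then show ?thesis using fst_set_subst[of "th n" ?L] by blast
    qed
    then show ?thesis using eval_word_F2[of ?W] SS_carrier by simp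
  qed
  finally have "k = eval_word F2 ?W" .
  moreover have "eval_word F2 ?W \<in> generate F2 (SS n)"
  proof (rule eval_word_generate[OF _ SS_carrier])
    have "fst ` set (th n e) \<subseteq> SS n" if "e \<in> fst ` set ?L" for e
    proof -
      have "fst e \<in> VV n" using phi_VV[OF V0] that by blast
      then show ?thesis using th_mem[OF n2, of "fst e" "snd e"] by simp
    qed
    then show "fst ` set ?W \<subseteq> SS n" using fst_set_subst[of "th n" ?L] by blast
  qed
  ultimately show ?thesis by simp
qed

end


lemma modcancel: "((a::int) + c) mod N = (b + c) mod N \<Longrightarrow> a mod N = b mod N"
  by (simp add: mod_eq_dvd_iff)

lemma reduced_allF: "(\<forall>l \<in> set L. snd l = False) \<Longrightarrow> reduced L"
  unfolding reduced_def by (metis Suc_lessD nth_mem)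

definition sig :: "nat \<Rightarrow> bool word \<Rightarrow> edge \<times> bool" where
  "sig n s = last (red (phi n (0, 0, 0) s))"

context fixes n :: nat assumes n2: "n \<ge> 2"
begin

lemma sig_red: "sig n (red u) = last (red (phi n (0, 0, 0) u))"
  unfolding sig_def using phi_red[OF n2 V0[OF n2]] by simp

lemma sig_A1: "i \<le> n - 1 \<Longrightarrow> k \<le> n - 1 \<Longrightarrow> sig n (eA1 n i k) = (((int n - 1, int k, int i), False), False)"
proof -
  assume a: "i \<le> n - 1" "k \<le> n - 1"
  let ?L = "concat (map (\<lambda>t. ga n ((int t, int k, int i), False)) [0..<n])"
  have nn: "[0..<n] = [0..<n - 1] @ [n - 1]" using n2 by (cases n) auto
  have r: "reduced ?L" by (rule reduced_allF) (auto simp: ga_def)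
  have lst: "ga n ((int (n - 1), int k, int i), False) = [(((int n - 1, int k, int i), False), False)]"
    using n2 by (simp add: ga_def of_nat_diff)
  have "last ?L = (((int n - 1, int k, int i), False), False)"
    by (subst nn) (simp only: map_append list.map concat_append concat.simps append_Nil2 lst last_appendR last_snoc list.distinct(1))
  then show ?thesis unfolding eA1_def sig_red rA1_walk(2)[OF n2 a] using r by (simp add: red_reduced)
qed

lemma sig_A2: "i \<le> n - 1 \<Longrightarrow> k \<le> n - 1 \<Longrightarrow>
  sig n (eA2 n i k) = (((int i, (int k + int i * (int n - 1)) mod int n, int n - 1), True), False)"
  unfolding eA2_def sig_red using rA2_walk(2)[OF n2] by (simp add: red_reduced)

lemma sig_U: "k \<le> n - 1 \<Longrightarrow> i \<le> n - 2 \<Longrightarrow> j \<le> n - 2 \<Longrightarrow> k = n - 1 \<or> (i, j) \<noteq> (0, 0) \<Longrightarrow>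
  sig n (eU n k i j) = (((int i, ((int k + int i * int j) mod int n + int i + 1) mod int n, int j + 1), False), True)"
proof -
  assume a: "k \<le> n - 1" "i \<le> n - 2" "j \<le> n - 2" "k = n - 1 \<or> (i, j) \<noteq> (0, 0)"
  define Y where "Y = (int k + int i * int j) mod int n"
  define Y2 where "Y2 = (Y + int i + 1) mod int n"
  have nt: "\<not> treeE n ((int i, Y2, int j + 1), False)"
  proof
    assume "treeE n ((int i, Y2, int j + 1), False)"
    then have ij: "i = 0" "j = 0" and Y2: "Y2 \<noteq> 0" by auto
    then have "k = n - 1" using a(4) by auto
    then have "int k + 1 = int n" using n2 by auto
    then have "Y2 = 0" using ij by (simp add: Y2_def Y_def mod_add_left_eq add.commute)
    then show False using Y2 by simp
  qed
  have w2: "winv (ga n ((int i, Y2, int j + 1), False)) = [(((int i, Y2, int j + 1), False), True)]"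
    using nt by (simp add: winv_ga del: treeE.simps)
  have r: "reduced (ga n ((int i, Y, int j), False) @ [(((int i, Y2, int j + 1), False), True)])"
    by (auto simp: ga_def reduced_Cons2)
  show ?thesis
    unfolding eU_red sig_red rU_walk(2)[OF n2 a(1-3)] Y_def[symmetric] Y2_def[symmetric] w2
    using r by (simp add: red_reduced Y2_def)
qed

end


context fixes n :: nat assumes n2: "n \<ge> 2"
begin

lemma A1s_img: "A1s n = (\<lambda>(i, k). eA1 n i k) ` ({0..<n} \<times> {0..<n})"
  unfolding A1s_def using n2 by (force simp: image_iff)
lemma A2s_img: "A2s n = (\<lambda>(i, k). eA2 n i k) ` ({0..<n} \<times> {0..<n})"
  unfolding A2s_def using n2 by (force simp: image_iff)
lemma A3s_img: "A3s n = (\<lambda>(i, j). eA3 n i j) ` ({0..<n - 1} \<times> {0..<n - 1})"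
  unfolding A3s_def using n2 by (force simp: image_iff)
lemma A4s_img: "A4s n = (\<lambda>(k, i, j). eA4 n k i j) ` ({0..<n - 1} \<times> ({0..<n - 1} \<times> {0..<n - 1} - {(0, 0)}))"
  unfolding A4s_def using n2 by (force simp: image_iff)

lemma eA3_eU: "eA3 n i j = eU n (n - 1) i j" by (simp add: eU_def)
lemma eA4_eU: "k \<le> n - 2 \<Longrightarrow> eA4 n k i j = eU n k i j"
proof -
  assume "k \<le> n - 2"
  then have "k \<noteq> n - 1" using n2 by arith
  then show ?thesis by (simp add: eU_def)
qed

lemma sig_A3: "i \<le> n - 2 \<Longrightarrow> j \<le> n - 2 \<Longrightarrow>
  sig n (eA3 n i j) = (((int i, ((int (n - 1) + int i * int j) mod int n + int i + 1) mod int n, int j + 1), False), True)"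
  unfolding eA3_eU using sig_U[OF n2, of "n - 1" i j] by simp

lemma sig_A4: "k \<le> n - 2 \<Longrightarrow> i \<le> n - 2 \<Longrightarrow> j \<le> n - 2 \<Longrightarrow> (i, j) \<noteq> (0, 0) \<Longrightarrow>
  sig n (eA4 n k i j) = (((int i, ((int k + int i * int j) mod int n + int i + 1) mod int n, int j + 1), False), True)"
  using eA4_eU[of k i j] sig_U[OF n2, of k i j] n2 by simp

lemma kcancel:
  assumes "((int k + c) mod int n + d) mod int n = ((int k' + c) mod int n + d) mod int n" "k < n" "k' < n"
  shows "k = k'"
proof -
  have "((int k + c) + d) mod int n = ((int k' + c) + d) mod int n"
    using assms(1) by (simp add: mod_add_left_eq)
  then have "int k mod int n = int k' mod int n" using modcancel[of "int k" "c + d" "int n" "int k'"]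
    by (simp add: add.assoc)
  then show ?thesis using assms(2,3) by simp
qed

lemma inj_A1: "inj_on (\<lambda>(i, k). eA1 n i k) ({0..<n} \<times> {0..<n})"
proof (rule inj_onI, clarify)
  fix i k i' k' assume a: "i \<in> {0..<n}" "k \<in> {0..<n}" "i' \<in> {0..<n}" "k' \<in> {0..<n}" "eA1 n i k = eA1 n i' k'"
  have b: "i \<le> n - 1" "k \<le> n - 1" "i' \<le> n - 1" "k' \<le> n - 1" using a(1-4) by auto
  have "sig n (eA1 n i k) = sig n (eA1 n i' k')" using a(5) by simp
  then have "(((int n - 1, int k, int i), False), False) = (((int n - 1, int k', int i'), False), False)"
    by (simp only: sig_A1[OF n2 b(1,2)] sig_A1[OF n2 b(3,4)])
  then show "i = i' \<and> k = k'" by simp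
qed

lemma inj_A2: "inj_on (\<lambda>(i, k). eA2 n i k) ({0..<n} \<times> {0..<n})"
proof (rule inj_onI, clarify)
  fix i k i' k' assume a: "i \<in> {0..<n}" "k \<in> {0..<n}" "i' \<in> {0..<n}" "k' \<in> {0..<n}" "eA2 n i k = eA2 n i' k'"
  have b: "i \<le> n - 1" "k \<le> n - 1" "i' \<le> n - 1" "k' \<le> n - 1" using a(1-4) by auto
  have "sig n (eA2 n i k) = sig n (eA2 n i' k')" using a(5) by simp
  then have "(((int i, (int k + int i * (int n - 1)) mod int n, int n - 1), True), False) =
     (((int i', (int k' + int i' * (int n - 1)) mod int n, int n - 1), True), False)"
    by (simp only: sig_A2[OF n2 b(1,2)] sig_A2[OF n2 b(3,4)])
  then have e: "i = i'" "(int k + int i * (int n - 1)) mod int n = (int k' + int i * (int n - 1)) mod int n"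
    by auto
  have "int k mod int n = int k' mod int n" by (rule modcancel[OF e(2)])
  then have "k = k'" using a(2,4) by simp
  then show "i = i' \<and> k = k'" using e by simp
qed

lemma inj_A3: "inj_on (\<lambda>(i, j). eA3 n i j) ({0..<n - 1} \<times> {0..<n - 1})"
proof (rule inj_onI, clarify)
  fix i j i' j' assume a: "i \<in> {0..<n - 1}" "j \<in> {0..<n - 1}" "i' \<in> {0..<n - 1}" "j' \<in> {0..<n - 1}" "eA3 n i j = eA3 n i' j'"
  have b: "i \<le> n - 2" "j \<le> n - 2" "i' \<le> n - 2" "j' \<le> n - 2" using a(1-4) by auto
  have "sig n (eA3 n i j) = sig n (eA3 n i' j')" using a(5) by simp
  then have "(((int i, ((int (n - 1) + int i * int j) mod int n + int i + 1) mod int n, int j + 1), False), True) =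
     (((int i', ((int (n - 1) + int i' * int j') mod int n + int i' + 1) mod int n, int j' + 1), False), True)"
    by (simp only: sig_A3[OF b(1,2)] sig_A3[OF b(3,4)])
  then show "i = i' \<and> j = j'" by simp
qed

lemma inj_A4: "inj_on (\<lambda>(k, i, j). eA4 n k i j) ({0..<n - 1} \<times> ({0..<n - 1} \<times> {0..<n - 1} - {(0, 0)}))"
proof (rule inj_onI)
  fix x y
  assume ax: "x \<in> {0..<n - 1} \<times> ({0..<n - 1} \<times> {0..<n - 1} - {(0, 0)})"
    and ay: "y \<in> {0..<n - 1} \<times> ({0..<n - 1} \<times> {0..<n - 1} - {(0, 0)})"
    and eq: "(\<lambda>(k, i, j). eA4 n k i j) x = (\<lambda>(k, i, j). eA4 n k i j) y"
  obtain k i j where x: "x = (k, i, j)" by (cases x) auto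
  obtain k' i' j' where y: "y = (k', i', j')" by (cases y) auto
  have b: "k \<le> n - 2" "i \<le> n - 2" "j \<le> n - 2" "(i, j) \<noteq> (0, 0)"
     "k' \<le> n - 2" "i' \<le> n - 2" "j' \<le> n - 2" "(i', j') \<noteq> (0, 0)" "k < n" "k' < n"
    using ax ay x y by auto
  have "sig n (eA4 n k i j) = sig n (eA4 n k' i' j')" using eq x y by simp
  then have "(((int i, ((int k + int i * int j) mod int n + int i + 1) mod int n, int j + 1), False), True) =
     (((int i', ((int k' + int i' * int j') mod int n + int i' + 1) mod int n, int j' + 1), False), True)"
    by (simp only: sig_A4[OF b(1-4)] sig_A4[OF b(5-8)])
  then have e: "i = i'" "j = j'"
    "((int k + int i * int j) mod int n + int i + 1) mod int n = ((int k' + int i * int j) mod int n + int i + 1) mod int n"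
    by auto
  have e3: "((int k + int i * int j) mod int n + (int i + 1)) mod int n = ((int k' + int i * int j) mod int n + (int i + 1)) mod int n"
    using e(3) by (simp only: add.assoc)
  have "k = k'" using kcancel[of k "int i * int j" "int i + 1" k'] e3 b(9,10) by auto
  then show "x = y" using e x y by simp
qed

lemma card_A1s: "card (A1s n) = n ^ 2"
  unfolding A1s_img using card_image[OF inj_A1] by (simp add: power2_eq_square)
lemma card_A2s: "card (A2s n) = n ^ 2"
  unfolding A2s_img using card_image[OF inj_A2] by (simp add: power2_eq_square)
lemma card_A3s: "card (A3s n) = (n - 1) ^ 2"
  unfolding A3s_img using card_image[OF inj_A3] by (simp add: power2_eq_square)
lemma card_A4s: "card (A4s n) = (n - 1) ^ 3 - (n - 1)"
proof -
  obtain m where m: "n = Suc m" "m \<ge> 1" using n2 by (cases n) auto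
  have c: "card ({0..<n - 1} \<times> {0..<n - 1} - {(0::nat, 0::nat)}) = (n - 1) * (n - 1) - 1"
    using n2 by (simp add: card_Diff_singleton card_cartesian_product)
  have "card (A4s n) = (n - 1) * ((n - 1) * (n - 1) - 1)"
    unfolding A4s_img card_image[OF inj_A4] card_cartesian_product c by simp
  also have "\<dots> = m * (m * m - 1)" using m by simp
  also have "\<dots> = m ^ 3 - m" by (simp add: power3_eq_cube diff_mult_distrib2)
  finally show ?thesis using m by simp
qed

lemma fin: "finite (A1s n)" "finite (A2s n)" "finite (A3s n)" "finite (A4s n)"
  by (simp_all add: A1s_img A2s_img A3s_img A4s_img)

lemma sig_flag1: "x \<in> A1s n \<Longrightarrow> snd (sig n x) = False \<and> snd (fst (sig n x)) = False"
proof -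
  assume "x \<in> A1s n"
  then obtain i k where a: "x = eA1 n i k" "i \<le> n - 1" "k \<le> n - 1" unfolding A1s_def by blast
  show ?thesis unfolding a(1) sig_A1[OF n2 a(2,3)] by simp
qed
lemma sig_flag2: "x \<in> A2s n \<Longrightarrow> snd (sig n x) = False \<and> snd (fst (sig n x)) = True"
proof -
  assume "x \<in> A2s n"
  then obtain i k where a: "x = eA2 n i k" "i \<le> n - 1" "k \<le> n - 1" unfolding A2s_def by blast
  show ?thesis unfolding a(1) sig_A2[OF n2 a(2,3)] by simp
qed
lemma sig_flag3: "x \<in> A3s n \<Longrightarrow> snd (sig n x) = True"
proof -
  assume "x \<in> A3s n"
  then obtain i j where a: "x = eA3 n i j" "i \<le> n - 2" "j \<le> n - 2" unfolding A3s_def by blast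
  show ?thesis unfolding a(1) sig_A3[OF a(2,3)] by simp
qed
lemma sig_flag4: "x \<in> A4s n \<Longrightarrow> snd (sig n x) = True"
proof -
  assume "x \<in> A4s n"
  then obtain k i j where a: "x = eA4 n k i j" "k \<le> n - 2" "i \<le> n - 2" "j \<le> n - 2" "(i, j) \<noteq> (0, 0)"
    unfolding A4s_def by blast
  show ?thesis unfolding a(1) sig_A4[OF a(2-5)] by simp
qed

lemma disj34: "A3s n \<inter> A4s n = {}"
proof (rule ccontr)
  assume "A3s n \<inter> A4s n \<noteq> {}"
  then obtain x where x3: "x \<in> A3s n" and x4: "x \<in> A4s n" by blast
  obtain i j where a: "x = eA3 n i j" "i \<le> n - 2" "j \<le> n - 2" using x3 unfolding A3s_def by blast
  obtain k i' j' where c: "x = eA4 n k i' j'" "k \<le> n - 2" "i' \<le> n - 2" "j' \<le> n - 2" "(i', j') \<noteq> (0, 0)"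
    using x4 unfolding A4s_def by blast
  have "sig n (eA3 n i j) = sig n (eA4 n k i' j')" using a(1) c(1) by simp
  then have "(((int i, ((int (n - 1) + int i * int j) mod int n + int i + 1) mod int n, int j + 1), False), True) =
     (((int i', ((int k + int i' * int j') mod int n + int i' + 1) mod int n, int j' + 1), False), True)"
    by (simp only: sig_A3[OF a(2,3)] sig_A4[OF c(2-5)])
  then have e: "i = i'" "j = j'"
    "((int (n - 1) + int i * int j) mod int n + int i + 1) mod int n = ((int k + int i * int j) mod int n + int i + 1) mod int n"
    by auto
  have e3: "((int (n - 1) + int i * int j) mod int n + (int i + 1)) mod int n = ((int k + int i * int j) mod int n + (int i + 1)) mod int n"
    using e(3) by (simp only: add.assoc)
  have "n - 1 = k" using kcancel[of "n - 1" "int i * int j" "int i + 1" k] e3 c(2) n2 by auto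
  then show False using c(2) n2 by simp
qed

lemma card_SS: "card (SS n) = n ^ 3 + 1"
proof -
  have d1: "A1s n \<inter> A2s n = {}" by (auto dest: sig_flag1 sig_flag2)
  have d2: "(A1s n \<union> A2s n) \<inter> A3s n = {}" by (auto dest: sig_flag1 sig_flag2 sig_flag3)
  have d3: "(A1s n \<union> A2s n \<union> A3s n) \<inter> A4s n = {}" using disj34 by (auto dest: sig_flag1 sig_flag2 sig_flag4)
  have "card (SS n) = card (A1s n) + card (A2s n) + card (A3s n) + card (A4s n)"
    unfolding SS_def using fin d1 d2 d3 by (simp add: card_Un_disjoint)
  also have "\<dots> = n ^ 2 + n ^ 2 + (n - 1) ^ 2 + ((n - 1) ^ 3 - (n - 1))"
    by (simp add: card_A1s card_A2s card_A3s card_A4s)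
  also have "\<dots> = n ^ 3 + 1"
  proof -
    obtain m where m: "n = m + 1" "m \<ge> 1" using n2 by (cases n) auto
    have "m \<le> m ^ 3" using m(2) by (simp add: power3_eq_cube)
    then obtain q where q: "m ^ 3 = m + q" by (metis le_Suc_ex)
    have "(m+1) ^ 2 + (m+1) ^ 2 + m ^ 2 + q = (m+1) ^ 3 + 1"
    proof -
      have qi: "int q = int m ^ 3 - int m" using q by (metis add_diff_cancel_left' of_nat_add of_nat_power)
      have "int ((m+1) ^ 2 + (m+1) ^ 2 + m ^ 2 + q) = int ((m+1) ^ 3 + 1)"
        by (simp add: qi power2_eq_square power3_eq_cube algebra_simps)
      then show ?thesis by (simp only: of_nat_eq_iff)
    qed
    then show ?thesis using m q by simp
  qed
  finally show ?thesis .
qed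

end


lemma gen_a_red: "gen_a = red aw" by (simp add: gen_a_def aw_def red_def)
lemma gen_b_red: "gen_b = red bw" by (simp add: gen_b_def bw_def red_def)

lemma T_red: "commutator F2 gen_a gen_b = red Tw"
  unfolding commutator_def gen_a_red gen_b_red
  by (simp add: Tw_def aw_def bw_def winv_def inv_l_def)

theorem lemma2p10:
  fixes n :: nat and h :: "bool word \<Rightarrow> int \<times> int \<times> int"
  assumes "n \<ge> 2"
    and "h \<in> hom F2 (heis n)"
    and "h gen_a = heis_alpha" and "h gen_b = heis_beta"
  defines "T \<equiv> commutator F2 gen_a gen_b"
  defines "A1 \<equiv> {T [^]\<^bsub>F2\<^esub> k \<otimes>\<^bsub>F2\<^esub> conjugate F2 (gen_a [^]\<^bsub>F2\<^esub> n) (gen_b [^]\<^bsub>F2\<^esub> i)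
                  \<otimes>\<^bsub>F2\<^esub> inv\<^bsub>F2\<^esub> (T [^]\<^bsub>F2\<^esub> k) | i k :: nat. i \<le> n - 1 \<and> k \<le> n - 1}"
  defines "A2 \<equiv> {T [^]\<^bsub>F2\<^esub> k \<otimes>\<^bsub>F2\<^esub> conjugate F2 (gen_b [^]\<^bsub>F2\<^esub> n) (gen_a [^]\<^bsub>F2\<^esub> i)
                  \<otimes>\<^bsub>F2\<^esub> inv\<^bsub>F2\<^esub> (T [^]\<^bsub>F2\<^esub> k) | i k :: nat. i \<le> n - 1 \<and> k \<le> n - 1}"
  defines "A3 \<equiv> {T [^]\<^bsub>F2\<^esub> (n - 1) \<otimes>\<^bsub>F2\<^esub>
                  conjugate F2 T (gen_a [^]\<^bsub>F2\<^esub> i \<otimes>\<^bsub>F2\<^esub> gen_b [^]\<^bsub>F2\<^esub> j)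
                  | i j :: nat. i \<le> n - 2 \<and> j \<le> n - 2}"
  defines "A4 \<equiv> {T [^]\<^bsub>F2\<^esub> k \<otimes>\<^bsub>F2\<^esub>
                  conjugate F2 T (gen_a [^]\<^bsub>F2\<^esub> i \<otimes>\<^bsub>F2\<^esub> gen_b [^]\<^bsub>F2\<^esub> j)
                  \<otimes>\<^bsub>F2\<^esub> inv\<^bsub>F2\<^esub> (T [^]\<^bsub>F2\<^esub> (k + 1))
                  | k i j :: nat. k \<le> n - 2 \<and> i \<le> n - 2 \<and> j \<le> n - 2 \<and> (i, j) \<noteq> (0, 0)}"
  shows "freely_generated_by F2 (kernel F2 (heis n) h) (A1 \<union> A2 \<union> A3 \<union> A4)
         \<and> card A1 = n ^ 2 \<and> card A2 = n ^ 2 \<and> card A3 = (n - 1) ^ 2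
         \<and> card A4 = (n - 1) ^ 3 - (n - 1)
         \<and> card (A1 \<union> A2 \<union> A3 \<union> A4) = n ^ 3 + 1"
proof -
  have n2: "n \<ge> 2" by fact
  have T: "T = red Tw" unfolding T_def by (rule T_red)
  have A1e: "A1 = A1s n"
    unfolding A1_def A1s_def T eA1_def rA1_def gen_a_red gen_b_red conjugate_def
    by (simp add: append_assoc)
  have A2e: "A2 = A2s n"
    unfolding A2_def A2s_def T eA2_def rA2_def gen_a_red gen_b_red conjugate_def
    by (simp add: append_assoc)
  have A3e: "A3 = A3s n"
    unfolding A3_def A3s_def T eA3_def rA3_def rP_def gen_a_red gen_b_red conjugate_def
    by (simp add: append_assoc)
  have A4e: "A4 = A4s n"
    unfolding A4_def A4s_def T eA4_def rA4_def rP_def gen_a_red gen_b_red conjugate_def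
    by (simp add: append_assoc pw_Suc2)
  have S: "A1 \<union> A2 \<union> A3 \<union> A4 = SS n" by (simp add: SS_def A1e A2e A3e A4e)
  interpret H: group "heis n" using group_heis n2 by simp
  interpret GH: group_hom F2 "heis n" h
    using assms(2) by (simp add: group_hom_def group_hom_axioms_def group_F2 H.group_axioms)
  have K: "kernel F2 (heis n) h = {k \<in> carrier F2. walk n (0, 0, 0) k = (0, 0, 0)}"
    unfolding kernel_def using h_walk[OF n2 assms(2-4)] by (auto simp: heis_one)
  have SK: "SS n \<subseteq> kernel F2 (heis n) h" unfolding K using SS_F[OF n2] by blast
  have gen: "generate F2 (SS n) = kernel F2 (heis n) h"
  proof
    show "generate F2 (SS n) \<subseteq> kernel F2 (heis n) h"
      by (rule F2.generate_subgroup_incl[OF SK GH.subgroup_kernel])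
    show "kernel F2 (heis n) h \<subseteq> generate F2 (SS n)"
      unfolding K using SS_gen[OF n2] by blast
  qed
  show ?thesis
    unfolding S freely_generated_by_def
    using gen SS_free[OF n2] card_SS[OF n2] card_A1s[OF n2] card_A2s[OF n2] card_A3s[OF n2] card_A4s[OF n2]
    by (simp add: A1e A2e A3e A4e)
qed


end
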